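(* Let $k\ge 2$, $1\le m<k$, and for each alternative $\ell\in\{1,\dots,k\}$ let $X_{\ell,1},X_{\ell,2},\dots$ be i.i.d. real random variables with mean $\mu_\ell$, independent across alternatives, with the means pairwise distinct and ordered as $\mu_{\langle 1\rangle}>\mu_{\langle 2\rangle}>\dots>\mu_{\langle k\rangle}$. Suppose Assumptions 1–4 of the context hold. Let $r_{\langle 1\rangle},\dots,r_{\langle k\rangle}>0$ with $\sum_\ell r_{\langle\ell\rangle}=1$, and for $T>0$ let $\mathrm{PFS}_T=\Pr\Big\{\bigcup_{i=1}^m\bigcup_{j=m+1}^k\big(\bar X_{\langle i\rangle}(r_{\langle i\rangle}T)\le \bar X_{\langle j\rangle}(r_{\langle j\rangle}T)\big)\Big\}$. Then $-\lim_{T\to\infty}\frac1T\log\mathrm{PFS}_T=\min_{i\in\{1,\dots,m\},\,j\in\{m+1,\dots,k\}}G_{ij}(r_{\langle i\rangle},r_{\langle j\rangle})$, where $G_{ij}(r_{\langle i\rangle},r_{\langle j\rangle})=\inf_{x\in\mathbb R}\big(r_{\langle i\rangle}\Lambda^*_{\langle i\rangle}(x)+r_{\langle j\rangle}\Lambda^*_{\langle j\rangle}(x)\big)$.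
   Context: $\bar X_\ell(n)$ denotes the sample mean of the first $n$ replications of alternative $\ell$ (integrality of $r_\ell T$ is ignored). Let $\Lambda^{(n)}_\ell(\lambda)=\log\mathbb E[e^{\lambda\bar X_\ell(n)}]$. Assumption 1: for each $\ell$ and all $\lambda\in\mathbb R$ the limit $\Lambda_\ell(\lambda)=\lim_{n\to\infty}\frac1n\Lambda^{(n)}_\ell(n\lambda)$ exists as an extended real number. Let $\mathcal D_{\Lambda_\ell}=\{\lambda:\Lambda_\ell(\lambda)<\infty\}$ with interior $\mathcal D^o_{\Lambda_\ell}$, and $\mathcal F_\ell=\{\Lambda_\ell'(\lambda):\lambda\in\mathcal D^o_{\Lambda_\ell}\}$ with interior $\mathcal F^o_\ell$. Assumption 2: $0\in\mathcal D^o_{\Lambda_\ell}$ for all $\ell$. Assumption 3: each $\Lambda_\ell$ is strictly convex and continuous on $\mathcal D^o_{\Lambda_\ell}$ and steep, i.e. $|\Lambda_\ell'(\lambda_n)|\to\infty$ for every sequence $\lambda_n\in\mathcal D^o_{\Lambda_\ell}$ converging to a boundary point of $\mathcal D^o_{\Lambda_\ell}$. Assumption 4: $[\mu_{\langle k\rangle},\mu_{\langle 1\rangle}]\subset\bigcap_{\ell=1}^k\mathcal F^o_\ell$. $\Lambda^*_\ell(x)=\sup_{\lambda\in\mathbb R}\{\lambda x-\Lambda_\ell(\lambda)\}$ is the Fenchel–Legendre transform. *)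

theory Defs
  imports "HOL-Probability.Probability"
begin

definition smean :: "(nat \<Rightarrow> 'a \<Rightarrow> real) \<Rightarrow> nat \<Rightarrow> 'a \<Rightarrow> real" where
  "smean Y n \<omega> = (\<Sum>t<n. Y t \<omega>) / real n"

definition eln :: "ennreal \<Rightarrow> ereal" where
  "eln x = (if x = \<infinity> then \<infinity> else if x = 0 then -\<infinity> else ereal (ln (enn2real x)))"

definition cgf_n :: "'a measure \<Rightarrow> (nat \<Rightarrow> 'a \<Rightarrow> real) \<Rightarrow> nat \<Rightarrow> real \<Rightarrow> ereal" where
  "cgf_n M Y n lam = eln (\<integral>\<^sup>+ \<omega>. ennreal (exp (lam * smean Y n \<omega>)) \<partial>M)"

definition edom :: "(real \<Rightarrow> ereal) \<Rightarrow> real set" where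
  "edom L = {lam. L lam < \<infinity>}"

(* real-valued version of \<Lambda> (meaningful on the effective domain) *)
definition rpart :: "(real \<Rightarrow> ereal) \<Rightarrow> real \<Rightarrow> real" where
  "rpart L lam = real_of_ereal (L lam)"

definition Fset :: "(real \<Rightarrow> ereal) \<Rightarrow> real set" where
  "Fset L = (\<lambda>lam. deriv (rpart L) lam) ` interior (edom L)"

definition strictly_convex_on :: "real set \<Rightarrow> (real \<Rightarrow> real) \<Rightarrow> bool" where
  "strictly_convex_on S f \<longleftrightarrow> (\<forall>x\<in>S. \<forall>y\<in>S. x \<noteq> y \<longrightarrow>
     (\<forall>u::real. 0 < u \<and> u < 1 \<longrightarrow> f (u * x + (1 - u) * y) < u * f x + (1 - u) * f y))"

definition steep :: "(real \<Rightarrow> ereal) \<Rightarrow> bool" where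
  "steep L \<longleftrightarrow> (\<forall>s b. (\<forall>n. s n \<in> interior (edom L)) \<longrightarrow> b \<in> frontier (interior (edom L)) \<longrightarrow>
      s \<longlonglongrightarrow> b \<longrightarrow> filterlim (\<lambda>n. \<bar>deriv (rpart L) (s n)\<bar>) at_top sequentially)"

definition legendre :: "(real \<Rightarrow> ereal) \<Rightarrow> real \<Rightarrow> ereal" where
  "legendre L x = (SUP lam. ereal (lam * x) - L lam)"

definition Grate :: "(real \<Rightarrow> ereal) \<Rightarrow> (real \<Rightarrow> ereal) \<Rightarrow> real \<Rightarrow> real \<Rightarrow> ereal" where
  "Grate Li Lj ri rj = (INF x. ereal ri * legendre Li x + ereal rj * legendre Lj x)"

end

theory Submission
  imports Defs
begin

locale ldp = prob_space M for M :: "'a measure" +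
  fixes X :: "nat \<Rightarrow> nat \<Rightarrow> 'a \<Rightarrow> real" and k :: nat
    and Lam :: "nat \<Rightarrow> real \<Rightarrow> ereal"
  assumes rv: "\<And>l t. l \<in> {1..k} \<Longrightarrow> X l t \<in> borel_measurable M"
    and indep: "indep_vars (\<lambda>_. borel) (\<lambda>p. X (fst p) (snd p)) ({1..k} \<times> UNIV)"
    and ident: "\<And>l t. l \<in> {1..k} \<Longrightarrow> distr M borel (X l t) = distr M borel (X l 0)"
    and integ: "\<And>l. l \<in> {1..k} \<Longrightarrow> integrable M (X l 0)"
    and A1: "\<And>l lam. l \<in> {1..k} \<Longrightarrow>
          ((\<lambda>n. cgf_n M (X l) n (real n * lam) / ereal (real n)) \<longlongrightarrow> Lam l lam) sequentially"
    and A2: "\<And>l. l \<in> {1..k} \<Longrightarrow> 0 \<in> interior (edom (Lam l))"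
begin

definition Ssum :: "nat \<Rightarrow> nat \<Rightarrow> 'a \<Rightarrow> real" where
  "Ssum l n \<omega> = (\<Sum>t<n. X l t \<omega>)"

definition NM :: "nat \<Rightarrow> real \<Rightarrow> ennreal" where
  "NM l lam = (\<integral>\<^sup>+\<omega>. ennreal (exp (lam * X l 0 \<omega>)) \<partial>M)"

lemma nn_ident:
  assumes l: "l \<in> {1..k}" and f: "f \<in> borel_measurable borel"
  shows "(\<integral>\<^sup>+\<omega>. f (X l t \<omega>) \<partial>M) = (\<integral>\<^sup>+\<omega>. f (X l 0 \<omega>) \<partial>M)"
proof -
  have "(\<integral>\<^sup>+\<omega>. f (X l t \<omega>) \<partial>M) = (\<integral>\<^sup>+x. f x \<partial>distr M borel (X l t))"
    using rv[OF l] f by (simp add: nn_integral_distr)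
  also have "\<dots> = (\<integral>\<^sup>+x. f x \<partial>distr M borel (X l 0))" using ident[OF l, of t] by simp
  also have "\<dots> = (\<integral>\<^sup>+\<omega>. f (X l 0 \<omega>) \<partial>M)"
    using rv[OF l] f by (simp add: nn_integral_distr)
  finally show ?thesis .
qed

lemma nn_prod_general:
  assumes I: "finite I" "I \<subseteq> {1..k} \<times> UNIV"
  shows "(\<integral>\<^sup>+\<omega>. ennreal (exp (\<Sum>p\<in>I. c p * X (fst p) (snd p) \<omega>)) \<partial>M)
         = (\<Prod>p\<in>I. NM (fst p) (c p))"
proof -
  have ind: "indep_vars (\<lambda>_. borel) (\<lambda>p \<omega>. exp (c p * X (fst p) (snd p) \<omega>)) I"
    by (rule indep_vars_compose2[OF indep_vars_subset[OF indep I(2)], where Y="\<lambda>p x. exp (c p * x)"])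
       auto
  have "(\<integral>\<^sup>+\<omega>. ennreal (exp (\<Sum>p\<in>I. c p * X (fst p) (snd p) \<omega>)) \<partial>M)
      = (\<integral>\<^sup>+\<omega>. ennreal (\<Prod>p\<in>I. exp (c p * X (fst p) (snd p) \<omega>)) \<partial>M)"
    by (simp add: exp_sum[OF I(1)])
  also have "\<dots> = (\<integral>\<^sup>+\<omega>. (\<Prod>p\<in>I. ennreal (exp (c p * X (fst p) (snd p) \<omega>))) \<partial>M)"
    by (simp add: prod_ennreal)
  also have "\<dots> = (\<Prod>p\<in>I. \<integral>\<^sup>+\<omega>. ennreal (exp (c p * X (fst p) (snd p) \<omega>)) \<partial>M)"
  proof -
    have ind2: "indep_vars (\<lambda>_. borel) (\<lambda>p \<omega>. ennreal (exp (c p * X (fst p) (snd p) \<omega>))) I"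
      by (rule indep_vars_compose2[OF ind, where Y="\<lambda>p x. ennreal x"]) auto
    show ?thesis by (rule indep_vars_nn_integral[OF I(1) ind2]) auto
  qed
  also have "\<dots> = (\<Prod>p\<in>I. NM (fst p) (c p))"
  proof (rule prod.cong[OF refl])
    fix p assume "p \<in> I"
    then have l: "fst p \<in> {1..k}" using I(2) by auto
    show "(\<integral>\<^sup>+\<omega>. ennreal (exp (c p * X (fst p) (snd p) \<omega>)) \<partial>M) = NM (fst p) (c p)"
      unfolding NM_def by (rule nn_ident[OF l, where f="\<lambda>x. ennreal (exp (c p * x))"]) auto
  qed
  finally show ?thesis .
qed

lemma sum_single_times: "(\<Sum>p\<in>{l}\<times>A. g p) = (\<Sum>t\<in>A. g (l, t))"
proof -
  have "{l}\<times>A = Pair l ` A" by auto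
  then show ?thesis by (simp add: sum.reindex inj_on_def)
qed

lemma prod_single_times: "(\<Prod>p\<in>{l}\<times>A. g p) = (\<Prod>t\<in>A. g (l, t))"
proof -
  have "{l}\<times>A = Pair l ` A" by auto
  then show ?thesis by (simp add: prod.reindex inj_on_def)
qed

lemma nn_single:
  assumes l: "l \<in> {1..k}"
  shows "(\<integral>\<^sup>+\<omega>. ennreal (exp (lam * Ssum l n \<omega>)) \<partial>M) = NM l lam ^ n"
proof -
  have "(\<integral>\<^sup>+\<omega>. ennreal (exp (lam * Ssum l n \<omega>)) \<partial>M)
      = (\<integral>\<^sup>+\<omega>. ennreal (exp (\<Sum>p\<in>{l}\<times>{..<n}. (\<lambda>_. lam) p * X (fst p) (snd p) \<omega>)) \<partial>M)"
    by (simp add: Ssum_def sum_distrib_left sum_single_times)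
  also have "\<dots> = (\<Prod>p\<in>{l}\<times>{..<n}. NM (fst p) lam)"
    using l by (subst nn_prod_general) auto
  also have "\<dots> = NM l lam ^ n"
    by (simp add: prod_single_times)
  finally show ?thesis .
qed

lemma nn_joint:
  assumes i: "i \<in> {1..k}" and j: "j \<in> {1..k}" and ij: "i \<noteq> j"
  shows "(\<integral>\<^sup>+\<omega>. ennreal (exp (a * Ssum i n \<omega> + b * Ssum j m \<omega>)) \<partial>M) = NM i a ^ n * NM j b ^ m"
proof -
  define c where "c p = (if fst p = i then a else b)" for p :: "nat \<times> nat"
  have disj: "({i}\<times>{..<n}) \<inter> ({j}\<times>{..<m}) = {}" using ij by auto
  have "(\<integral>\<^sup>+\<omega>. ennreal (exp (a * Ssum i n \<omega> + b * Ssum j m \<omega>)) \<partial>M)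
      = (\<integral>\<^sup>+\<omega>. ennreal (exp (\<Sum>p\<in>({i}\<times>{..<n}) \<union> ({j}\<times>{..<m}). c p * X (fst p) (snd p) \<omega>)) \<partial>M)"
    using ij disj
    by (simp add: sum.union_disjoint Ssum_def sum_distrib_left sum_single_times c_def)
  also have "\<dots> = (\<Prod>p\<in>({i}\<times>{..<n}) \<union> ({j}\<times>{..<m}). NM (fst p) (c p))"
    using i j by (subst nn_prod_general) auto
  also have "\<dots> = NM i a ^ n * NM j b ^ m"
    using ij disj by (simp add: prod.union_disjoint prod_single_times c_def)
  finally show ?thesis .
qed

end


lemma exp_quad: "\<bar>exp u - 1 - u\<bar> \<le> u\<^sup>2 * exp \<bar>u\<bar>" for u :: real
proof -
  obtain t where t: "\<bar>t\<bar> \<le> \<bar>u\<bar>" "exp u = (\<Sum>m<2. (u ^ m) / fact m) + (exp t / fact 2) * u ^ 2"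
    using Maclaurin_exp_le[of u 2] by blast
  have "exp u - 1 - u = exp t / 2 * u\<^sup>2" using t(2) by (simp add: eval_nat_numeral)
  moreover have "exp t \<le> exp \<bar>u\<bar>" using t(1) by simp
  ultimately have "\<bar>exp u - 1 - u\<bar> = exp t / 2 * u\<^sup>2"
    by (metis abs_of_nonneg divide_nonneg_nonneg exp_ge_zero mult_nonneg_nonneg zero_le_numeral zero_le_power2)
  also have "\<dots> \<le> exp \<bar>u\<bar> * u\<^sup>2"
  proof -
    have "exp t / 2 \<le> exp \<bar>u\<bar>" using \<open>exp t \<le> exp \<bar>u\<bar>\<close> exp_gt_zero[of t] by linarith
    then show ?thesis by (intro mult_right_mono) auto
  qed
  finally show ?thesis by (simp add: mult.commute)
qed

lemma sq_le_exp: "(x::real)\<^sup>2 \<le> 2 * exp \<bar>x\<bar>"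
proof -
  obtain t where t: "\<bar>t\<bar> \<le> \<bar>\<bar>x\<bar>\<bar>" "exp \<bar>x\<bar> = (\<Sum>m<3. (\<bar>x\<bar> ^ m) / fact m) + (exp t / fact 3) * \<bar>x\<bar> ^ 3"
    using Maclaurin_exp_le[of "\<bar>x\<bar>" 3] by blast
  have "exp \<bar>x\<bar> = 1 + \<bar>x\<bar> + x\<^sup>2/2 + exp t / 6 * \<bar>x\<bar>^3"
    using t(2) by (simp add: eval_nat_numeral fact_numeral)
  moreover have "0 \<le> exp t / 6 * \<bar>x\<bar>^3" by simp
  ultimately show ?thesis by simp
qed

lemma abs_le_exp: "\<bar>x::real\<bar> \<le> exp \<bar>x\<bar>"
  using exp_ge_add_one_self[of "\<bar>x\<bar>"] by linarith

lemma exp_abs_split: "exp (e * x) * exp (d * \<bar>x\<bar>) \<le> exp ((e + d) * x) + exp ((e - d) * x)" for x :: real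
proof (cases "x \<ge> 0")
  case True
  then have "exp (e * x) * exp (d * \<bar>x\<bar>) = exp ((e + d) * x)" by (simp add: exp_add[symmetric] algebra_simps)
  then show ?thesis by (metis add_increasing2 exp_ge_zero order_refl)
next
  case False
  then have "exp (e * x) * exp (d * \<bar>x\<bar>) = exp ((e - d) * x)" by (simp add: exp_add[symmetric] algebra_simps)
  then show ?thesis by (metis add_increasing exp_ge_zero order_refl)
qed

context ldp
begin

definition Dm :: "nat \<Rightarrow> real set" where
  "Dm l = {lam. integrable M (\<lambda>\<omega>. exp (lam * X l 0 \<omega>))}"

definition Mg :: "nat \<Rightarrow> real \<Rightarrow> real" where
  "Mg l lam = (\<integral>\<omega>. exp (lam * X l 0 \<omega>) \<partial>M)"

definition M1 :: "nat \<Rightarrow> real \<Rightarrow> real" where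
  "M1 l lam = (\<integral>\<omega>. X l 0 \<omega> * exp (lam * X l 0 \<omega>) \<partial>M)"

definition L :: "nat \<Rightarrow> real \<Rightarrow> real" where
  "L l lam = ln (Mg l lam)"

definition mu :: "nat \<Rightarrow> real" where
  "mu l = (\<integral>\<omega>. X l 0 \<omega> \<partial>M)"

definition tm :: "nat \<Rightarrow> real \<Rightarrow> real" where
  "tm l lam = M1 l lam / Mg l lam"

lemma Dm0: "0 \<in> Dm l" by (simp add: Dm_def)
lemma Mg0: "Mg l 0 = 1" by (simp add: Mg_def prob_space)

lemma M1_0: "M1 l 0 = mu l" by (simp add: M1_def mu_def)

lemma NM_Dm:
  assumes l: "l \<in> {1..k}" and lam: "lam \<in> Dm l"
  shows "NM l lam = ennreal (Mg l lam)"
  using lam unfolding NM_def Mg_def Dm_def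
  by (intro nn_integral_eq_integral) auto

lemma NM_not_Dm:
  assumes l: "l \<in> {1..k}" and lam: "lam \<notin> Dm l"
  shows "NM l lam = \<top>"
proof (rule ccontr)
  assume "NM l lam \<noteq> \<top>"
  have [measurable]: "X l 0 \<in> borel_measurable M" using rv[OF l] .
  have "integrable M (\<lambda>\<omega>. exp (lam * X l 0 \<omega>))"
    using \<open>NM l lam \<noteq> \<top>\<close> unfolding NM_def
    by (intro integrableI_nonneg) (auto simp: top.not_eq_extremum)
  then show False using lam by (simp add: Dm_def)
qed

lemma Mg_tangent:
  assumes l: "l \<in> {1..k}" and lam: "lam \<in> Dm l" and eta: "eta \<in> Dm l"
    and i1: "integrable M (\<lambda>\<omega>. X l 0 \<omega> * exp (eta * X l 0 \<omega>))"
  shows "Mg l lam \<ge> exp ((lam - eta) * c) * (Mg l eta + (lam - eta) * (M1 l eta - c * Mg l eta))"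
proof -
  have [measurable]: "X l 0 \<in> borel_measurable M" using rv[OF l] .
  have ie: "integrable M (\<lambda>\<omega>. exp (eta * X l 0 \<omega>))" using eta by (simp add: Dm_def)
  have pw: "exp ((lam - eta) * c) * (exp (eta * x) + (lam - eta) * (x * exp (eta * x) - c * exp (eta * x)))
      \<le> exp (lam * x)" for x
  proof -
    have "1 + (lam - eta) * (x - c) \<le> exp ((lam - eta) * (x - c))" by (rule exp_ge_add_one_self)
    then have "exp ((lam - eta) * c) * exp (eta * x) * (1 + (lam - eta) * (x - c))
         \<le> exp ((lam - eta) * c) * exp (eta * x) * exp ((lam - eta) * (x - c))"
      by (intro mult_left_mono) auto
    also have "\<dots> = exp (lam * x)" by (simp add: exp_add[symmetric] algebra_simps)
    finally show ?thesis by (simp add: algebra_simps)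
  qed
  have "exp ((lam - eta) * c) * (Mg l eta + (lam - eta) * (M1 l eta - c * Mg l eta))
      = (\<integral>\<omega>. exp ((lam - eta) * c) * (exp (eta * X l 0 \<omega>) + (lam - eta) * (X l 0 \<omega> * exp (eta * X l 0 \<omega>) - c * exp (eta * X l 0 \<omega>))) \<partial>M)"
    using ie i1 by (simp add: Mg_def M1_def)
  also have "\<dots> \<le> Mg l lam"
    unfolding Mg_def
    using ie i1 lam pw by (intro integral_mono) (auto simp: Dm_def)
  finally show ?thesis .
qed

lemma Jensen_Mg:
  assumes l: "l \<in> {1..k}" and lam: "lam \<in> Dm l"
  shows "Mg l lam \<ge> exp (lam * mu l)"
  using Mg_tangent[OF l lam Dm0, of "mu l"] integ[OF l] by (simp add: Mg0 M1_0)

lemma Mg_pos: "l \<in> {1..k} \<Longrightarrow> lam \<in> Dm l \<Longrightarrow> Mg l lam > 0"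
  using Jensen_Mg[of l lam] by (meson exp_gt_zero less_le_trans)

lemma L_ge: "l \<in> {1..k} \<Longrightarrow> lam \<in> Dm l \<Longrightarrow> L l lam \<ge> lam * mu l"
  using Jensen_Mg[of l lam] Mg_pos[of l lam] unfolding L_def
  by (metis ln_exp ln_le_cancel_iff exp_gt_zero)

lemma L0: "L l 0 = 0" by (simp add: L_def Mg0)

end


lemma pw_quad:
  fixes x h e d :: real
  assumes d: "d > 0" and h: "\<bar>h\<bar> \<le> d"
  shows "\<bar>exp ((e + h) * x) - exp (e * x) - h * (x * exp (e * x))\<bar>
         \<le> h\<^sup>2 * (2 / d\<^sup>2 * (exp (e * x) * exp ((2 * d) * \<bar>x\<bar>)))"
proof -
  have eq: "exp ((e + h) * x) - exp (e * x) - h * (x * exp (e * x)) = exp (e * x) * (exp (h * x) - 1 - h * x)"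
    by (simp add: exp_add distrib_right algebra_simps)
  have a1: "\<bar>exp (h * x) - 1 - h * x\<bar> \<le> (h * x)\<^sup>2 * exp \<bar>h * x\<bar>" by (rule exp_quad)
  have a2: "exp \<bar>h * x\<bar> \<le> exp (d * \<bar>x\<bar>)"
    using h by (simp add: abs_mult mult_right_mono)
  have a3: "(d * x)\<^sup>2 \<le> 2 * exp \<bar>d * x\<bar>" by (rule sq_le_exp)
  then have a3': "x\<^sup>2 \<le> 2 / d\<^sup>2 * exp (d * \<bar>x\<bar>)"
    using d by (simp add: abs_mult power_mult_distrib field_simps)
  have "(h * x)\<^sup>2 * exp \<bar>h * x\<bar> \<le> h\<^sup>2 * (2 / d\<^sup>2 * exp (d * \<bar>x\<bar>)) * exp (d * \<bar>x\<bar>)"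
    unfolding power_mult_distrib
    by (intro mult_mono mult_left_mono a2 a3') auto
  also have "\<dots> = h\<^sup>2 * (2 / d\<^sup>2 * exp ((2 * d) * \<bar>x\<bar>))"
    by (simp add: exp_add[symmetric] algebra_simps)
  finally have "\<bar>exp (h * x) - 1 - h * x\<bar> \<le> h\<^sup>2 * (2 / d\<^sup>2 * exp ((2 * d) * \<bar>x\<bar>))"
    using a1 by linarith
  then have "exp (e * x) * \<bar>exp (h * x) - 1 - h * x\<bar> \<le> exp (e * x) * (h\<^sup>2 * (2 / d\<^sup>2 * exp ((2 * d) * \<bar>x\<bar>)))"
    by (intro mult_left_mono) auto
  moreover have "\<bar>exp ((e + h) * x) - exp (e * x) - h * (x * exp (e * x))\<bar> = exp (e * x) * \<bar>exp (h * x) - 1 - h * x\<bar>"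
    unfolding eq abs_mult by simp
  moreover have "exp (e * x) * (h\<^sup>2 * (2 / d\<^sup>2 * exp ((2 * d) * \<bar>x\<bar>))) = h\<^sup>2 * (2 / d\<^sup>2 * (exp (e * x) * exp ((2 * d) * \<bar>x\<bar>)))"
    by (simp add: ac_simps)
  ultimately show ?thesis by linarith
qed

lemma eln_ennreal: "y > 0 \<Longrightarrow> eln (ennreal y) = ereal (ln y)"
  unfolding eln_def by (auto simp: ennreal_eq_0_iff)

context ldp
begin

lemma int_exp_abs:
  assumes l: "l \<in> {1..k}" and p: "e + d \<in> Dm l" and m: "e - d \<in> Dm l"
  shows "integrable M (\<lambda>\<omega>. exp (e * X l 0 \<omega>) * exp (d * \<bar>X l 0 \<omega>\<bar>))"
proof -
  have [measurable]: "X l 0 \<in> borel_measurable M" using rv[OF l] .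
  have "integrable M (\<lambda>\<omega>. exp ((e + d) * X l 0 \<omega>) + exp ((e - d) * X l 0 \<omega>))"
    using p m by (auto simp: Dm_def)
  then show ?thesis
  proof (rule Bochner_Integration.integrable_bound)
    show "AE \<omega> in M. norm (exp (e * X l 0 \<omega>) * exp (d * \<bar>X l 0 \<omega>\<bar>)) \<le> norm (exp ((e + d) * X l 0 \<omega>) + exp ((e - d) * X l 0 \<omega>))"
      using exp_abs_split by (intro AE_I2) (simp add: abs_mult)
  qed auto
qed

lemma int_x_exp:
  assumes l: "l \<in> {1..k}" and d: "d > 0" and p: "e + d \<in> Dm l" and m: "e - d \<in> Dm l"
  shows "integrable M (\<lambda>\<omega>. X l 0 \<omega> * exp (e * X l 0 \<omega>))"
proof -
  have [measurable]: "X l 0 \<in> borel_measurable M" using rv[OF l] .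
  have ib: "integrable M (\<lambda>\<omega>. (1 / d) * (exp (e * X l 0 \<omega>) * exp (d * \<bar>X l 0 \<omega>\<bar>)))"
    using int_exp_abs[OF l p m] by simp
  have pw: "\<bar>x * exp (e * x)\<bar> \<le> (1 / d) * (exp (e * x) * exp (d * \<bar>x\<bar>))" for x
  proof -
    have "\<bar>d * x\<bar> \<le> exp \<bar>d * x\<bar>" by (rule abs_le_exp)
    then have "\<bar>x\<bar> \<le> (1 / d) * exp (d * \<bar>x\<bar>)" using d by (simp add: abs_mult field_simps)
    then have "\<bar>x\<bar> * exp (e * x) \<le> (1 / d) * exp (d * \<bar>x\<bar>) * exp (e * x)"
      by (intro mult_right_mono) auto
    then show ?thesis by (simp add: abs_mult algebra_simps)
  qed
  show ?thesis
  proof (rule Bochner_Integration.integrable_bound[OF ib])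
    show "AE \<omega> in M. norm (X l 0 \<omega> * exp (e * X l 0 \<omega>)) \<le> norm ((1 / d) * (exp (e * X l 0 \<omega>) * exp (d * \<bar>X l 0 \<omega>\<bar>)))"
      using pw d by (intro AE_I2) (simp add: abs_mult)
  qed auto
qed

lemma quad_bound:
  assumes l: "l \<in> {1..k}" and d: "d > 0" and ball: "\<And>h. \<bar>h\<bar> \<le> 2 * d \<Longrightarrow> e + h \<in> Dm l"
    and h: "\<bar>h\<bar> \<le> d"
  shows "\<bar>Mg l (e + h) - Mg l e - h * M1 l e\<bar>
          \<le> h\<^sup>2 * (2 / d\<^sup>2 * (\<integral>\<omega>. exp (e * X l 0 \<omega>) * exp ((2 * d) * \<bar>X l 0 \<omega>\<bar>) \<partial>M))"
proof -
  have [measurable]: "X l 0 \<in> borel_measurable M" using rv[OF l] .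
  have b1: "e + 2 * d \<in> Dm l" using ball[of "2*d"] d by simp
  have b2: "e - 2 * d \<in> Dm l" using ball[of "-2*d"] d by simp
  have b3: "e + d \<in> Dm l" using ball[of "d"] d by simp
  have b4: "e - d \<in> Dm l" using ball[of "-d"] d by simp
  have ib: "integrable M (\<lambda>\<omega>. exp (e * X l 0 \<omega>) * exp ((2 * d) * \<bar>X l 0 \<omega>\<bar>))"
    by (rule int_exp_abs[OF l b1 b2])
  have ix: "integrable M (\<lambda>\<omega>. X l 0 \<omega> * exp (e * X l 0 \<omega>))"
    by (rule int_x_exp[OF l d b3 b4])
  have ieh: "integrable M (\<lambda>\<omega>. exp ((e + h) * X l 0 \<omega>))" using ball[of h] h d by (simp add: Dm_def)
  have ie: "integrable M (\<lambda>\<omega>. exp (e * X l 0 \<omega>))" using ball[of 0] d by (simp add: Dm_def)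
  have eq: "Mg l (e + h) - Mg l e - h * M1 l e
      = (\<integral>\<omega>. exp ((e + h) * X l 0 \<omega>) - exp (e * X l 0 \<omega>) - h * (X l 0 \<omega> * exp (e * X l 0 \<omega>)) \<partial>M)"
    unfolding Mg_def M1_def
    by (subst Bochner_Integration.integral_diff, (intro Bochner_Integration.integrable_diff ieh ie integrable_mult_right ix)+,
        subst Bochner_Integration.integral_diff, (intro ieh ie)+) simp
  have "\<bar>(\<integral>\<omega>. exp ((e + h) * X l 0 \<omega>) - exp (e * X l 0 \<omega>) - h * (X l 0 \<omega> * exp (e * X l 0 \<omega>)) \<partial>M)\<bar> \<le> (\<integral>\<omega>. \<bar>exp ((e + h) * X l 0 \<omega>) - exp (e * X l 0 \<omega>) - h * (X l 0 \<omega> * exp (e * X l 0 \<omega>))\<bar> \<partial>M)"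
    by (rule integral_abs_bound)
  also have "\<dots> \<le> (\<integral>\<omega>. h\<^sup>2 * (2 / d\<^sup>2 * (exp (e * X l 0 \<omega>) * exp ((2 * d) * \<bar>X l 0 \<omega>\<bar>))) \<partial>M)"
  proof (rule integral_mono)
    show "integrable M (\<lambda>\<omega>. h\<^sup>2 * (2 / d\<^sup>2 * (exp (e * X l 0 \<omega>) * exp ((2 * d) * \<bar>X l 0 \<omega>\<bar>))))"
      using ib by simp
    show "integrable M (\<lambda>\<omega>. \<bar>exp ((e + h) * X l 0 \<omega>) - exp (e * X l 0 \<omega>) - h * (X l 0 \<omega> * exp (e * X l 0 \<omega>))\<bar>)"
      by (intro integrable_abs Bochner_Integration.integrable_diff ieh ie integrable_mult_right ix)
    show "\<bar>exp ((e + h) * X l 0 \<omega>) - exp (e * X l 0 \<omega>) - h * (X l 0 \<omega> * exp (e * X l 0 \<omega>))\<bar>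
         \<le> h\<^sup>2 * (2 / d\<^sup>2 * (exp (e * X l 0 \<omega>) * exp ((2 * d) * \<bar>X l 0 \<omega>\<bar>)))" for \<omega>
      by (rule pw_quad[OF d h])
  qed
  also have "\<dots> = h\<^sup>2 * (2 / d\<^sup>2 * (\<integral>\<omega>. exp (e * X l 0 \<omega>) * exp ((2 * d) * \<bar>X l 0 \<omega>\<bar>) \<partial>M))"
    by simp
  finally show ?thesis unfolding eq .
qed

lemma Mg_deriv:
  assumes l: "l \<in> {1..k}" and e: "e \<in> interior (Dm l)"
  shows "(Mg l has_real_derivative M1 l e) (at e)"
proof -
  obtain r where r: "r > 0" "ball e r \<subseteq> Dm l" using e mem_interior by blast
  define d where "d = r / 3"
  have d: "d > 0" using r by (simp add: d_def)
  have ball: "e + h \<in> Dm l" if "\<bar>h\<bar> \<le> 2 * d" for h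
    using that r unfolding d_def by (intro subsetD[OF r(2)]) (auto simp: dist_real_def)
  define K where "K = 2 / d\<^sup>2 * (\<integral>\<omega>. exp (e * X l 0 \<omega>) * exp ((2 * d) * \<bar>X l 0 \<omega>\<bar>) \<partial>M)"
  have qb: "\<bar>Mg l (e + h) - Mg l e - h * M1 l e\<bar> \<le> h\<^sup>2 * K" if "\<bar>h\<bar> \<le> d" for h
    unfolding K_def by (rule quad_bound[OF l d ball that])
  have "((\<lambda>h. (Mg l (e + h) - Mg l e) / h - M1 l e) \<longlongrightarrow> 0) (at 0)"
  proof (rule Lim_null_comparison)
    show "((\<lambda>h. \<bar>h\<bar> * K) \<longlongrightarrow> 0) (at 0)"
      by (intro tendsto_mult_left_zero tendsto_rabs_zero tendsto_ident_at)
    show "\<forall>\<^sub>F h in at 0. norm ((Mg l (e + h) - Mg l e) / h - M1 l e) \<le> \<bar>h\<bar> * K"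
      unfolding eventually_at
    proof (intro exI[of _ d] conjI ballI impI)
      fix h :: real assume h: "h \<noteq> 0 \<and> dist h 0 < d"
      then have hd: "\<bar>h\<bar> \<le> d" by simp
      have "(Mg l (e + h) - Mg l e) / h - M1 l e = (Mg l (e + h) - Mg l e - h * M1 l e) / h"
        using h by (simp add: field_simps)
      then have "norm ((Mg l (e + h) - Mg l e) / h - M1 l e) = \<bar>Mg l (e + h) - Mg l e - h * M1 l e\<bar> / \<bar>h\<bar>"
        by simp
      also have "\<dots> \<le> h\<^sup>2 * K / \<bar>h\<bar>"
        using qb[OF hd] by (intro divide_right_mono) auto
      also have "\<dots> = \<bar>h\<bar> * K"
      proof -
        have e1: "h\<^sup>2 = \<bar>h\<bar> * \<bar>h\<bar>" by (simp add: power2_eq_square)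
        have nz: "\<bar>h\<bar> \<noteq> 0" using h by simp
        show ?thesis by (metis e1 mult.assoc nonzero_mult_div_cancel_left nz)
      qed
      finally show "norm ((Mg l (e + h) - Mg l e) / h - M1 l e) \<le> \<bar>h\<bar> * K" .
    qed (use d in auto)
  qed
  then show ?thesis unfolding DERIV_def by (subst Lim_null) simp
qed

lemma L_deriv:
  assumes l: "l \<in> {1..k}" and e: "e \<in> interior (Dm l)"
  shows "(L l has_real_derivative tm l e) (at e)"
proof -
  have pos: "Mg l e > 0" using Mg_pos[OF l] e interior_subset by blast
  have "((\<lambda>x. ln (Mg l x)) has_real_derivative (1 / Mg l e) * M1 l e) (at e)"
    by (rule DERIV_chain2[OF DERIV_ln_divide[OF pos] Mg_deriv[OF l e]])
  then show ?thesis by (simp add: L_def[abs_def] tm_def)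
qed

lemma smean_Ssum: "smean (X l) n \<omega> = Ssum l n \<omega> / real n"
  by (simp add: smean_def Ssum_def)

lemma Lam_eq:
  assumes l: "l \<in> {1..k}"
  shows "Lam l lam = (if lam \<in> Dm l then ereal (L l lam) else \<infinity>)"
proof -
  have cg: "cgf_n M (X l) n (real n * lam) = eln (NM l lam ^ n)" if n: "n > 0" for n
  proof -
    have "cgf_n M (X l) n (real n * lam) = eln (\<integral>\<^sup>+\<omega>. ennreal (exp (lam * Ssum l n \<omega>)) \<partial>M)"
      unfolding cgf_n_def smean_Ssum using n by simp
    then show ?thesis by (simp add: nn_single[OF l])
  qed
  define c where "c = (if lam \<in> Dm l then ereal (L l lam) else \<infinity>)"
  have ev: "\<forall>\<^sub>F n in sequentially. cgf_n M (X l) n (real n * lam) / ereal (real n) = c"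
    unfolding eventually_sequentially
  proof (intro exI[of _ 1] allI impI)
    fix n :: nat assume "n \<ge> 1"
    then have n: "n > 0" by simp
    show "cgf_n M (X l) n (real n * lam) / ereal (real n) = c"
    proof (cases "lam \<in> Dm l")
      case True
      have pos: "Mg l lam > 0" using Mg_pos[OF l True] .
      have "NM l lam ^ n = ennreal (Mg l lam ^ n)"
        using NM_Dm[OF l True] pos by (simp add: ennreal_power)
      then have "eln (NM l lam ^ n) = ereal (ln (Mg l lam ^ n))"
        using eln_ennreal[OF zero_less_power[OF pos, of n]] by simp
      also have "\<dots> = ereal (real n * L l lam)" using pos by (simp add: ln_realpow L_def)
      finally show ?thesis using cg[OF n] True n c_def by simp
    next
      case False
      have "NM l lam ^ n = \<top>" using NM_not_Dm[OF l False] n by (simp add: top_power_ennreal)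
      then have "eln (NM l lam ^ n) = \<infinity>" by (simp add: eln_def)
      then show ?thesis using cg[OF n] False n c_def by simp
    qed
  qed
  have "((\<lambda>n. cgf_n M (X l) n (real n * lam) / ereal (real n)) \<longlongrightarrow> c) sequentially"
    using tendsto_eventually[OF ev] .
  from LIMSEQ_unique[OF A1[OF l] this] show ?thesis by (simp add: c_def)
qed

lemma edom_Lam: "l \<in> {1..k} \<Longrightarrow> edom (Lam l) = Dm l"
  by (auto simp: edom_def Lam_eq)

lemma rpart_Lam: "l \<in> {1..k} \<Longrightarrow> lam \<in> Dm l \<Longrightarrow> rpart (Lam l) lam = L l lam"
  by (simp add: rpart_def Lam_eq)

lemma deriv_Lam:
  assumes l: "l \<in> {1..k}" and e: "e \<in> interior (Dm l)"
  shows "deriv (rpart (Lam l)) e = tm l e"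
proof -
  have eqs: "L l x = rpart (Lam l) x" if "x \<in> interior (Dm l)" for x
    using rpart_Lam[OF l, of x] interior_subset[of "Dm l"] that by auto
  have "(rpart (Lam l) has_real_derivative tm l e) (at e)"
    by (rule has_field_derivative_transform_within_open[OF L_deriv[OF l e] open_interior e eqs])
  then show ?thesis by (rule DERIV_imp_deriv)
qed

lemma Fset_Lam: "l \<in> {1..k} \<Longrightarrow> Fset (Lam l) = tm l ` interior (Dm l)"
  unfolding Fset_def by (simp add: edom_Lam deriv_Lam cong: image_cong)

lemma legendre_ge:
  assumes l: "l \<in> {1..k}" and lam: "lam \<in> Dm l"
  shows "ereal (lam * x - L l lam) \<le> legendre (Lam l) x"
  unfolding legendre_def
  by (rule SUP_upper2[of lam]) (use l lam in \<open>auto simp: Lam_eq\<close>)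

lemma legendre_le:
  assumes l: "l \<in> {1..k}" and B: "\<And>lam. lam \<in> Dm l \<Longrightarrow> lam * x - L l lam \<le> B"
  shows "legendre (Lam l) x \<le> ereal B"
  unfolding legendre_def
proof (rule SUP_least)
  fix lam :: real
  show "ereal (lam * x) - Lam l lam \<le> ereal B"
    using B[of lam] l by (auto simp: Lam_eq)
qed

lemma legendre_nonneg: "l \<in> {1..k} \<Longrightarrow> legendre (Lam l) x \<ge> 0"
  using legendre_ge[of l 0 x] by (simp add: Dm0 L0 zero_ereal_def)

end


context ldp
begin

lemma tangent_L:
  assumes l: "l \<in> {1..k}" and e: "e \<in> interior (Dm l)" and lam: "lam \<in> Dm l"
  shows "lam * tm l e - L l lam \<le> e * tm l e - L l e"
proof -
  obtain r where r: "r > 0" "ball e r \<subseteq> Dm l" using e mem_interior by blast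
  have b1: "e + r/2 \<in> Dm l" "e - r/2 \<in> Dm l" using r by (auto intro!: subsetD[OF r(2)] simp: dist_real_def)
  have ix: "integrable M (\<lambda>\<omega>. X l 0 \<omega> * exp (e * X l 0 \<omega>))"
    by (rule int_x_exp[OF l _ b1]) (use r in simp)
  have eD: "e \<in> Dm l" using e interior_subset by blast
  have pe: "Mg l e > 0" by (rule Mg_pos[OF l eD])
  have pl: "Mg l lam > 0" by (rule Mg_pos[OF l lam])
  have "Mg l lam \<ge> exp ((lam - e) * tm l e) * (Mg l e + (lam - e) * (M1 l e - tm l e * Mg l e))"
    by (rule Mg_tangent[OF l lam eD ix])
  moreover have "M1 l e - tm l e * Mg l e = 0" using pe by (simp add: tm_def)
  ultimately have "Mg l lam \<ge> exp ((lam - e) * tm l e) * Mg l e" by simp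
  then have "ln (Mg l lam) \<ge> ln (exp ((lam - e) * tm l e) * Mg l e)"
    using pe pl by (subst ln_le_cancel_iff) auto
  also have "ln (exp ((lam - e) * tm l e) * Mg l e) = (lam - e) * tm l e + L l e"
    using pe by (simp add: ln_mult L_def)
  finally have "L l lam \<ge> (lam - e) * tm l e + L l e" by (simp add: L_def)
  then show ?thesis by (simp add: algebra_simps)
qed

lemma legendre_tm:
  assumes l: "l \<in> {1..k}" and e: "e \<in> interior (Dm l)"
  shows "legendre (Lam l) (tm l e) = ereal (e * tm l e - L l e)"
proof (rule antisym)
  show "legendre (Lam l) (tm l e) \<le> ereal (e * tm l e - L l e)"
    by (rule legendre_le[OF l tangent_L[OF l e]])
  show "ereal (e * tm l e - L l e) \<le> legendre (Lam l) (tm l e)"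
    by (rule legendre_ge[OF l]) (use e interior_subset in blast)
qed

lemma legendre_approx:
  assumes l: "l \<in> {1..k}" and fin: "legendre (Lam l) x = ereal v" and eps: "eps > 0"
  shows "\<exists>lam\<in>Dm l. lam * x - L l lam > v - eps"
proof (rule ccontr)
  assume "\<not> ?thesis"
  then have "\<And>lam. lam \<in> Dm l \<Longrightarrow> lam * x - L l lam \<le> v - eps" by (auto simp: not_less)
  then have "legendre (Lam l) x \<le> ereal (v - eps)" by (rule legendre_le[OF l])
  then show False using fin eps by simp
qed

lemma legendre_mu: "l \<in> {1..k} \<Longrightarrow> legendre (Lam l) (mu l) = 0"
proof -
  assume l: "l \<in> {1..k}"
  have "legendre (Lam l) (mu l) \<le> ereal 0"
    by (rule legendre_le[OF l]) (use L_ge[OF l] in \<open>simp add: mult.commute\<close>)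
  then show ?thesis using legendre_nonneg[OF l, of "mu l"] by (simp add: zero_ereal_def)
qed

lemma legendre_term:
  assumes l: "l \<in> {1..k}"
    and B: "\<And>lam. lam \<in> Dm l \<Longrightarrow> ereal (lam * y - L l lam) \<le> Q"
  shows "legendre (Lam l) y \<le> Q"
  unfolding legendre_def
proof (rule SUP_least)
  fix lam :: real
  show "ereal (lam * y) - Lam l lam \<le> Q"
  proof (cases "lam \<in> Dm l")
    case False
    then have "Lam l lam = \<infinity>" using Lam_eq[OF l] by simp
    then show ?thesis by simp
  next
    case True
    then have "Lam l lam = ereal (L l lam)" using Lam_eq[OF l] by simp
    then show ?thesis using B[OF True] by simp
  qed
qed

lemma legendre_mono_up:
  assumes l: "l \<in> {1..k}" and y: "mu l \<le> y" "y \<le> x"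
  shows "legendre (Lam l) y \<le> legendre (Lam l) x"
proof (rule legendre_term[OF l])
  fix lam assume lam: "lam \<in> Dm l"
  have g: "ereal (lam * x - L l lam) \<le> legendre (Lam l) x" by (rule legendre_ge[OF l lam])
  have n: "0 \<le> legendre (Lam l) x" by (rule legendre_nonneg[OF l])
  show "ereal (lam * y - L l lam) \<le> legendre (Lam l) x"
  proof (cases "lam \<ge> 0")
    case True
    have "lam * y - L l lam \<le> lam * x - L l lam" using True y by (simp add: mult_left_mono)
    then show ?thesis using g by (metis ereal_less_eq(3) order_trans)
  next
    case False
    have "lam * y \<le> lam * mu l" using False y by (simp add: mult_left_mono_neg)
    then have "lam * y - L l lam \<le> 0" using L_ge[OF l lam] by (simp add: mult.commute)
    then have "ereal (lam * y - L l lam) \<le> 0" by (simp add: zero_ereal_def)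
    then show ?thesis using n by (rule order_trans)
  qed
qed

lemma legendre_mono_down:
  assumes l: "l \<in> {1..k}" and y: "y \<le> mu l" "x \<le> y"
  shows "legendre (Lam l) y \<le> legendre (Lam l) x"
proof (rule legendre_term[OF l])
  fix lam assume lam: "lam \<in> Dm l"
  have g: "ereal (lam * x - L l lam) \<le> legendre (Lam l) x" by (rule legendre_ge[OF l lam])
  have n: "0 \<le> legendre (Lam l) x" by (rule legendre_nonneg[OF l])
  show "ereal (lam * y - L l lam) \<le> legendre (Lam l) x"
  proof (cases "lam \<le> 0")
    case True
    have "lam * y - L l lam \<le> lam * x - L l lam" using True y by (simp add: mult_left_mono_neg)
    then show ?thesis using g by (metis ereal_less_eq(3) order_trans)
  next
    case False
    have "lam * y \<le> lam * mu l" using False y by (simp add: mult_left_mono)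
    then have "lam * y - L l lam \<le> 0" using L_ge[OF l lam] by (simp add: mult.commute)
    then have "ereal (lam * y - L l lam) \<le> 0" by (simp add: zero_ereal_def)
    then show ?thesis using n by (rule order_trans)
  qed
qed

end

locale ldp2 = ldp +
  fixes lo hi :: real
  assumes lohi: "lo \<le> hi"
    and H: "\<And>l. l \<in> {1..k} \<Longrightarrow> {lo..hi} \<subseteq> interior (Fset (Lam l))"
begin

definition good :: "nat \<Rightarrow> real \<Rightarrow> real \<Rightarrow> bool" where
  "good l A d \<longleftrightarrow> d > 0 \<and> 0 \<le> A \<and>
     (\<forall>lam\<in>Dm l. \<forall>x\<in>{lo-d..hi+d}. lam * x - L l lam \<le> A - d * \<bar>lam\<bar>)"

definition R :: "nat \<Rightarrow> real \<Rightarrow> real" where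
  "R l x = real_of_ereal (legendre (Lam l) x)"

lemma good_exists:
  assumes l: "l \<in> {1..k}"
  shows "\<exists>A d. good l A d"
proof -
  have S: "{lo..hi} \<subseteq> interior (tm l ` interior (Dm l))" using H[OF l] Fset_Lam[OF l] by simp
  have "lo \<in> interior (tm l ` interior (Dm l))" using S lohi by auto
  then obtain e1 where e1: "e1 > 0" "ball lo e1 \<subseteq> tm l ` interior (Dm l)"
    using mem_interior interior_subset by (metis (no_types, lifting) interior_interior)
  have "lo - e1/2 \<in> tm l ` interior (Dm l)" using e1 by (intro subsetD[OF e1(2)]) (simp add: dist_real_def)
  then obtain a1 where a1: "a1 \<in> interior (Dm l)" "tm l a1 = lo - e1/2" by auto
  have "hi \<in> interior (tm l ` interior (Dm l))" using S lohi by auto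
  then obtain e2 where e2: "e2 > 0" "ball hi e2 \<subseteq> tm l ` interior (Dm l)"
    using mem_interior interior_subset by (metis (no_types, lifting) interior_interior)
  have "hi + e2/2 \<in> tm l ` interior (Dm l)" using e2 by (intro subsetD[OF e2(2)]) (simp add: dist_real_def)
  then obtain a2 where a2: "a2 \<in> interior (Dm l)" "tm l a2 = hi + e2/2" by auto
  define x1 where "x1 = lo - e1/2"
  define x2 where "x2 = hi + e2/2"
  define B1 where "B1 = a1 * x1 - L l a1"
  define B2 where "B2 = a2 * x2 - L l a2"
  define d where "d = min e1 e2 / 4"
  define A where "A = max (max B1 B2) 0"
  have t1: "lam * x1 - L l lam \<le> B1" if "lam \<in> Dm l" for lam
    using tangent_L[OF l a1(1) that] a1(2) unfolding B1_def x1_def by simp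
  have t2: "lam * x2 - L l lam \<le> B2" if "lam \<in> Dm l" for lam
    using tangent_L[OF l a2(1) that] a2(2) unfolding B2_def x2_def by simp
  have "good l A d"
    unfolding good_def
  proof (intro conjI ballI)
    show "d > 0" using e1 e2 by (simp add: d_def)
    show "0 \<le> A" by (simp add: A_def)
    fix lam x assume lam: "lam \<in> Dm l" and x: "x \<in> {lo-d..hi+d}"
    have dle1: "d \<le> e1/4" and dle2: "d \<le> e2/4" by (auto simp: d_def)
    show "lam * x - L l lam \<le> A - d * \<bar>lam\<bar>"
    proof (cases "lam \<le> 0")
      case True
      have "x - x1 \<ge> d" using x dle1 e1 by (simp add: x1_def)
      then have "lam * (x - x1) \<le> lam * d" using True by (simp add: mult_left_mono_neg)
      moreover have "lam * d = - (d * \<bar>lam\<bar>)" using True by simp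
      moreover have "lam * x - L l lam = lam * (x - x1) + (lam * x1 - L l lam)" by (simp add: algebra_simps)
      moreover have "B1 \<le> A" by (simp add: A_def)
      ultimately show ?thesis using t1[OF lam] by linarith
    next
      case False
      have "x2 - x \<ge> d" using x dle2 e2 by (simp add: x2_def)
      then have "lam * d \<le> lam * (x2 - x)" using False by (simp add: mult_left_mono)
      then have "lam * (x - x2) \<le> - (lam * d)" by (simp add: algebra_simps)
      moreover have "lam * d = d * \<bar>lam\<bar>" using False by simp
      moreover have "lam * x - L l lam = lam * (x - x2) + (lam * x2 - L l lam)" by (simp add: algebra_simps)
      moreover have "B2 \<le> A" by (simp add: A_def)
      ultimately show ?thesis using t2[OF lam] by linarith
    qed
  qed
  then show ?thesis by blast
qed

lemma good_mono: "good l A d \<Longrightarrow> 0 < d' \<Longrightarrow> d' \<le> d \<Longrightarrow> good l A d'"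
  unfolding good_def
proof (intro conjI ballI, simp, simp)
  fix lam x
  assume g: "0 < d \<and> 0 \<le> A \<and> (\<forall>lam\<in>Dm l. \<forall>x\<in>{lo - d..hi + d}. lam * x - L l lam \<le> A - d * \<bar>lam\<bar>)"
    and d': "0 < d'" "d' \<le> d" and lam: "lam \<in> Dm l" and x: "x \<in> {lo - d'..hi + d'}"
  have "x \<in> {lo - d..hi + d}" using x d' by auto
  then have "lam * x - L l lam \<le> A - d * \<bar>lam\<bar>" using g lam by blast
  moreover have "d' * \<bar>lam\<bar> \<le> d * \<bar>lam\<bar>" using d' by (simp add: mult_right_mono)
  ultimately show "lam * x - L l lam \<le> A - d' * \<bar>lam\<bar>" by linarith
qed

lemma good_R:
  assumes l: "l \<in> {1..k}" and g: "good l A d" and x: "x \<in> {lo-d..hi+d}"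
  shows "legendre (Lam l) x = ereal (R l x)" "0 \<le> R l x" "R l x \<le> A"
proof -
  have le: "legendre (Lam l) x \<le> ereal A"
  proof (rule legendre_le[OF l])
    fix lam assume "lam \<in> Dm l"
    then have "lam * x - L l lam \<le> A - d * \<bar>lam\<bar>" using g x unfolding good_def by blast
    moreover have "d * \<bar>lam\<bar> \<ge> 0" using g unfolding good_def by simp
    ultimately show "lam * x - L l lam \<le> A" by linarith
  qed
  have ge: "0 \<le> legendre (Lam l) x" by (rule legendre_nonneg[OF l])
  obtain v where v: "legendre (Lam l) x = ereal v" using le ge
    by (cases "legendre (Lam l) x") auto
  show "legendre (Lam l) x = ereal (R l x)" using v by (simp add: R_def)
  show "0 \<le> R l x" using v ge by (simp add: R_def zero_ereal_def)
  show "R l x \<le> A" using v le by (simp add: R_def)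
qed

lemma R_ge:
  assumes l: "l \<in> {1..k}" and g: "good l A d" and x: "x \<in> {lo-d..hi+d}" and lam: "lam \<in> Dm l"
  shows "lam * x - L l lam \<le> R l x"
  using legendre_ge[OF l lam, of x] good_R(1)[OF l g x] by simp

lemma R_approx:
  assumes l: "l \<in> {1..k}" and g: "good l A d" and x: "x \<in> {lo-d..hi+d}" and eps: "eps > 0"
  shows "\<exists>lam\<in>Dm l. lam * x - L l lam > R l x - eps"
  by (rule legendre_approx[OF l good_R(1)[OF l g x] eps])

lemma R_neg:
  assumes l: "l \<in> {1..k}" and g: "good l A d" and x: "x \<in> {lo-d..hi+d}" and eps: "eps > 0"
    and xm: "x \<le> mu l"
  shows "\<exists>lam\<in>Dm l. lam \<le> 0 \<and> lam * x - L l lam > R l x - eps"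
proof -
  obtain lam where lam: "lam \<in> Dm l" "lam * x - L l lam > R l x - eps" using R_approx[OF l g x eps] by blast
  show ?thesis
  proof (cases "lam \<le> 0")
    case True then show ?thesis using lam by blast
  next
    case False
    have "lam * x \<le> lam * mu l" using False xm by (simp add: mult_left_mono)
    then have "lam * x - L l lam \<le> 0" using L_ge[OF l lam(1)] by (simp add: mult.commute)
    then have "0 * x - L l 0 > R l x - eps" using lam(2) by (simp add: L0)
    then show ?thesis using Dm0 by blast
  qed
qed

lemma R_pos:
  assumes l: "l \<in> {1..k}" and g: "good l A d" and x: "x \<in> {lo-d..hi+d}" and eps: "eps > 0"
    and xm: "x \<ge> mu l"
  shows "\<exists>lam\<in>Dm l. lam \<ge> 0 \<and> lam * x - L l lam > R l x - eps"
proof -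
  obtain lam where lam: "lam \<in> Dm l" "lam * x - L l lam > R l x - eps" using R_approx[OF l g x eps] by blast
  show ?thesis
  proof (cases "lam \<ge> 0")
    case True then show ?thesis using lam by blast
  next
    case False
    have "lam * x \<le> lam * mu l" using False xm by (simp add: mult_left_mono_neg)
    then have "lam * x - L l lam \<le> 0" using L_ge[OF l lam(1)] by (simp add: mult.commute)
    then have "0 * x - L l 0 > R l x - eps" using lam(2) by (simp add: L0)
    then show ?thesis using Dm0 by blast
  qed
qed

lemma R_lip:
  assumes l: "l \<in> {1..k}" and g: "good l A d" and x: "x \<in> {lo-d..hi+d}" and y: "y \<in> {lo-d..hi+d}"
  shows "R l x - (A + 1) / d * \<bar>y - x\<bar> \<le> R l y"
proof (rule ccontr)
  assume "\<not> ?thesis"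
  then have gap: "R l y < R l x - (A + 1) / d * \<bar>y - x\<bar>" by simp
  define eps where "eps = min 1 ((R l x - (A + 1) / d * \<bar>y - x\<bar> - R l y) / 2)"
  have eps: "eps > 0" "eps \<le> 1" using gap by (auto simp: eps_def)
  obtain lam where lam: "lam \<in> Dm l" "lam * x - L l lam > R l x - eps" using R_approx[OF l g x eps(1)] by blast
  have d: "d > 0" using g by (simp add: good_def)
  have b: "lam * x - L l lam \<le> A - d * \<bar>lam\<bar>" using g x lam(1) unfolding good_def by blast
  have "R l x \<ge> 0" by (rule good_R(2)[OF l g x])
  then have "d * \<bar>lam\<bar> \<le> A + 1" using b lam(2) eps by linarith
  then have lb: "\<bar>lam\<bar> \<le> (A + 1) / d" using d by (simp add: field_simps)
  have "lam * y - L l lam \<le> R l y" by (rule R_ge[OF l g y lam(1)])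
  moreover have "lam * y - L l lam = (lam * x - L l lam) + lam * (y - x)" by (simp add: algebra_simps)
  moreover have "lam * (y - x) \<ge> - (\<bar>lam\<bar> * \<bar>y - x\<bar>)"
    by (metis abs_ge_minus_self abs_mult minus_le_iff)
  moreover have "\<bar>lam\<bar> * \<bar>y - x\<bar> \<le> (A + 1) / d * \<bar>y - x\<bar>" using lb by (rule mult_right_mono) simp
  ultimately have "R l y \<ge> R l x - eps - (A + 1) / d * \<bar>y - x\<bar>" using lam(2) by linarith
  moreover have "eps \<le> (R l x - (A + 1) / d * \<bar>y - x\<bar> - R l y) / 2" unfolding eps_def by (rule min.cobounded2)
  ultimately show False using gap
  proof -
    define cc where "cc = (A + 1) / d * \<bar>y - x\<bar>"
    assume "R l x - eps - (A + 1) / d * \<bar>y - x\<bar> \<le> R l y"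
      "eps \<le> (R l x - (A + 1) / d * \<bar>y - x\<bar> - R l y) / 2"
      "R l y < R l x - (A + 1) / d * \<bar>y - x\<bar>"
    then have "R l x - eps - cc \<le> R l y" "eps \<le> (R l x - cc - R l y) / 2" "R l y < R l x - cc"
      unfolding cc_def by auto
    then show False by argo
  qed
qed

lemma R_mu:
  assumes l: "l \<in> {1..k}" and g: "good l A d" and x: "mu l \<in> {lo-d..hi+d}"
  shows "R l (mu l) = 0"
  using good_R(1)[OF l g x] legendre_mu[OF l] by (simp add: zero_ereal_def)

lemma R_tm:
  assumes l: "l \<in> {1..k}" and g: "good l A d" and e: "e \<in> interior (Dm l)" and x: "tm l e \<in> {lo-d..hi+d}"
  shows "R l (tm l e) = e * tm l e - L l e"
  using good_R(1)[OF l g x] legendre_tm[OF l e] by simp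

end


context ldp
begin

lemma Ssum_meas[measurable]: "l \<in> {1..k} \<Longrightarrow> Ssum l n \<in> borel_measurable M"
  unfolding Ssum_def[abs_def] using rv by (intro borel_measurable_sum) auto

lemma Mg_pow: "l \<in> {1..k} \<Longrightarrow> lam \<in> Dm l \<Longrightarrow> Mg l lam ^ n = exp (real n * L l lam)"
  using Mg_pos[of l lam] by (simp add: exp_of_nat_mult L_def)

lemma joint_int:
  assumes i: "i \<in> {1..k}" and j: "j \<in> {1..k}" and ij: "i \<noteq> j"
    and a: "a \<in> Dm i" and b: "b \<in> Dm j"
  shows "integrable M (\<lambda>\<omega>. exp (a * Ssum i n \<omega> + b * Ssum j m \<omega> + c))"
    "(\<integral>\<omega>. exp (a * Ssum i n \<omega> + b * Ssum j m \<omega> + c) \<partial>M) = exp (c + real n * L i a + real m * L j b)"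
proof -
  have [measurable]: "Ssum i n \<in> borel_measurable M" "Ssum j m \<in> borel_measurable M"
    using i j by auto
  have nn: "(\<integral>\<^sup>+\<omega>. ennreal (exp (a * Ssum i n \<omega> + b * Ssum j m \<omega>)) \<partial>M) = ennreal (Mg i a ^ n * Mg j b ^ m)"
    using nn_joint[OF i j ij] NM_Dm[OF i a] NM_Dm[OF j b] Mg_pos[OF i a] Mg_pos[OF j b]
    by (simp add: ennreal_power ennreal_mult)
  have int0: "integrable M (\<lambda>\<omega>. exp (a * Ssum i n \<omega> + b * Ssum j m \<omega>))"
    by (rule integrableI_nonneg) (use nn in auto)
  have val0: "(\<integral>\<omega>. exp (a * Ssum i n \<omega> + b * Ssum j m \<omega>) \<partial>M) = Mg i a ^ n * Mg j b ^ m"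
    using integral_eq_nn_integral[of "\<lambda>\<omega>. exp (a * Ssum i n \<omega> + b * Ssum j m \<omega>)" M] nn
      Mg_pos[OF i a] Mg_pos[OF j b] by simp
  have eq: "(\<lambda>\<omega>. exp (a * Ssum i n \<omega> + b * Ssum j m \<omega> + c)) = (\<lambda>\<omega>. exp c * exp (a * Ssum i n \<omega> + b * Ssum j m \<omega>))"
    by (simp add: exp_add ac_simps)
  show "integrable M (\<lambda>\<omega>. exp (a * Ssum i n \<omega> + b * Ssum j m \<omega> + c))"
    unfolding eq using int0 by simp
  show "(\<integral>\<omega>. exp (a * Ssum i n \<omega> + b * Ssum j m \<omega> + c) \<partial>M) = exp (c + real n * L i a + real m * L j b)"
    unfolding eq using val0 Mg_pow[OF i a, of n] Mg_pow[OF j b, of m] by (simp add: exp_add)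
qed

lemma chernoff:
  assumes i: "i \<in> {1..k}" and j: "j \<in> {1..k}" and ij: "i \<noteq> j"
    and a: "a \<in> Dm i" and b: "b \<in> Dm j" and A: "A \<in> sets M"
    and hA: "\<And>\<omega>. \<omega> \<in> A \<Longrightarrow> 0 \<le> a * (Ssum i n \<omega> - real n * u) + b * (Ssum j m \<omega> - real m * v)"
  shows "measure M A \<le> exp (real n * (L i a - a * u) + real m * (L j b - b * v))"
proof -
  define c where "c = - (a * real n * u) - b * real m * v"
  have f: "a * (Ssum i n \<omega> - real n * u) + b * (Ssum j m \<omega> - real m * v) = a * Ssum i n \<omega> + b * Ssum j m \<omega> + c" for \<omega>
    by (simp add: c_def algebra_simps)
  have "measure M A = (\<integral>\<omega>. indicator A \<omega> \<partial>M)" using A by (simp add: sets.Int_space_eq2)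
  also have "\<dots> \<le> (\<integral>\<omega>. exp (a * Ssum i n \<omega> + b * Ssum j m \<omega> + c) \<partial>M)"
  proof (rule integral_mono)
    show "integrable M (indicator A :: 'a \<Rightarrow> real)" using A by (simp add: integrable_indicator_iff emeasure_eq_measure)
    show "integrable M (\<lambda>\<omega>. exp (a * Ssum i n \<omega> + b * Ssum j m \<omega> + c))" by (rule joint_int[OF i j ij a b])
    fix \<omega> show "indicator A \<omega> \<le> exp (a * Ssum i n \<omega> + b * Ssum j m \<omega> + c)"
    proof (cases "\<omega> \<in> A")
      case True
      then have "0 \<le> a * Ssum i n \<omega> + b * Ssum j m \<omega> + c" using hA f by metis
      then show ?thesis using True by simp
    qed simp
  qed
  also have "\<dots> = exp (c + real n * L i a + real m * L j b)" by (rule joint_int[OF i j ij a b])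
  also have "\<dots> = exp (real n * (L i a - a * u) + real m * (L j b - b * v))"
    by (simp add: c_def algebra_simps)
  finally show ?thesis .
qed

lemma tilt_lower:
  assumes i: "i \<in> {1..k}" and j: "j \<in> {1..k}" and ij: "i \<noteq> j"
    and ei: "ei \<in> Dm i" and ej: "ej \<in> Dm j"
    and ei1: "ei + h \<in> Dm i" and ei2: "ei - h \<in> Dm i"
    and ej1: "ej + h \<in> Dm j" and ej2: "ej - h \<in> Dm j"
    and h: "h > 0" and rho: "rho > 0" and n: "n > 0" and m: "m > 0"
    and qi1: "exp (L i (ei + h) - L i ei - h * (a + rho)) \<le> q"
    and qi2: "exp (L i (ei - h) - L i ei + h * (a - rho)) \<le> q"
    and qj1: "exp (L j (ej + h) - L j ej - h * (b + rho)) \<le> q"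
    and qj2: "exp (L j (ej - h) - L j ej + h * (b - rho)) \<le> q"
  shows "exp (- real n * (ei * a - L i ei + \<bar>ei\<bar> * rho) - real m * (ej * b - L j ej + \<bar>ej\<bar> * rho))
           * (1 - 2 * q ^ n - 2 * q ^ m)
         \<le> measure M {\<omega> \<in> space M. \<bar>Ssum i n \<omega> / real n - a\<bar> < rho \<and> \<bar>Ssum j m \<omega> / real m - b\<bar> < rho}"
proof -
  have [measurable]: "Ssum i n \<in> borel_measurable M" "Ssum j m \<in> borel_measurable M"
    using i j by auto
  define B where "B = {\<omega> \<in> space M. \<bar>Ssum i n \<omega> / real n - a\<bar> < rho \<and> \<bar>Ssum j m \<omega> / real m - b\<bar> < rho}"
  have Bm: "B \<in> sets M" unfolding B_def by measurable
  define W where "W \<omega> = ei * Ssum i n \<omega> + ej * Ssum j m \<omega> + 0" for \<omega>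
  define c where "c = real n * (ei * a + \<bar>ei\<bar> * rho) + real m * (ej * b + \<bar>ej\<bar> * rho)"
  define K where "K = exp (0 + real n * L i ei + real m * L j ej)"
  define f1 where "f1 \<omega> = exp ((ei + h) * Ssum i n \<omega> + ej * Ssum j m \<omega> + (- h * real n * (a + rho)))" for \<omega>
  define f2 where "f2 \<omega> = exp ((ei - h) * Ssum i n \<omega> + ej * Ssum j m \<omega> + h * real n * (a - rho))" for \<omega>
  define f3 where "f3 \<omega> = exp (ei * Ssum i n \<omega> + (ej + h) * Ssum j m \<omega> + (- h * real m * (b + rho)))" for \<omega>
  define f4 where "f4 \<omega> = exp (ei * Ssum i n \<omega> + (ej - h) * Ssum j m \<omega> + h * real m * (b - rho))" for \<omega>
  have iW: "integrable M (\<lambda>\<omega>. exp (W \<omega>))" unfolding W_def by (rule joint_int[OF i j ij ei ej])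
  have vW: "(\<integral>\<omega>. exp (W \<omega>) \<partial>M) = K" unfolding W_def K_def by (rule joint_int[OF i j ij ei ej])
  have i1: "integrable M f1" unfolding f1_def by (rule joint_int[OF i j ij ei1 ej])
  have i2: "integrable M f2" unfolding f2_def by (rule joint_int[OF i j ij ei2 ej])
  have i3: "integrable M f3" unfolding f3_def by (rule joint_int[OF i j ij ei ej1])
  have i4: "integrable M f4" unfolding f4_def by (rule joint_int[OF i j ij ei ej2])
  have powle: "exp (real n * t) \<le> q ^ n" if "exp t \<le> q" for t n
    using that by (simp add: exp_of_nat_mult power_mono)
  have v1: "(\<integral>\<omega>. f1 \<omega> \<partial>M) \<le> K * q ^ n"
  proof -
    have "(\<integral>\<omega>. f1 \<omega> \<partial>M) = exp (- h * real n * (a + rho) + real n * L i (ei + h) + real m * L j ej)"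
      unfolding f1_def by (rule joint_int[OF i j ij ei1 ej])
    also have "\<dots> = K * exp (real n * (L i (ei + h) - L i ei - h * (a + rho)))"
      unfolding K_def by (simp add: exp_add[symmetric] algebra_simps)
    also have "\<dots> \<le> K * q ^ n" using powle[OF qi1] by (simp add: K_def)
    finally show ?thesis .
  qed
  have v2: "(\<integral>\<omega>. f2 \<omega> \<partial>M) \<le> K * q ^ n"
  proof -
    have "(\<integral>\<omega>. f2 \<omega> \<partial>M) = exp (h * real n * (a - rho) + real n * L i (ei - h) + real m * L j ej)"
      unfolding f2_def by (rule joint_int[OF i j ij ei2 ej])
    also have "\<dots> = K * exp (real n * (L i (ei - h) - L i ei + h * (a - rho)))"
      unfolding K_def by (simp add: exp_add[symmetric] algebra_simps)
    also have "\<dots> \<le> K * q ^ n" using powle[OF qi2] by (simp add: K_def)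
    finally show ?thesis .
  qed
  have v3: "(\<integral>\<omega>. f3 \<omega> \<partial>M) \<le> K * q ^ m"
  proof -
    have "(\<integral>\<omega>. f3 \<omega> \<partial>M) = exp (- h * real m * (b + rho) + real n * L i ei + real m * L j (ej + h))"
      unfolding f3_def by (rule joint_int[OF i j ij ei ej1])
    also have "\<dots> = K * exp (real m * (L j (ej + h) - L j ej - h * (b + rho)))"
      unfolding K_def by (simp add: exp_add[symmetric] algebra_simps)
    also have "\<dots> \<le> K * q ^ m" using powle[OF qj1] by (simp add: K_def)
    finally show ?thesis .
  qed
  have v4: "(\<integral>\<omega>. f4 \<omega> \<partial>M) \<le> K * q ^ m"
  proof -
    have "(\<integral>\<omega>. f4 \<omega> \<partial>M) = exp (h * real m * (b - rho) + real n * L i ei + real m * L j (ej - h))"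
      unfolding f4_def by (rule joint_int[OF i j ij ei ej2])
    also have "\<dots> = K * exp (real m * (L j (ej - h) - L j ej + h * (b - rho)))"
      unfolding K_def by (simp add: exp_add[symmetric] algebra_simps)
    also have "\<dots> \<le> K * q ^ m" using powle[OF qj2] by (simp add: K_def)
    finally show ?thesis .
  qed
  have iWB: "integrable M (\<lambda>\<omega>. exp (W \<omega>) * indicator B \<omega>)"
    by (rule integrable_real_mult_indicator[OF Bm iW])
  have pw: "exp (W \<omega>) \<le> exp (W \<omega>) * indicator B \<omega> + (f1 \<omega> + f2 \<omega> + f3 \<omega> + f4 \<omega>)" if \<omega>: "\<omega> \<in> space M" for \<omega>
  proof (cases "\<omega> \<in> B")
    case True
    then show ?thesis by (simp add: f1_def f2_def f3_def f4_def add_nonneg_nonneg)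
  next
    case False
    have nn: "0 \<le> f1 \<omega>" "0 \<le> f2 \<omega>" "0 \<le> f3 \<omega>" "0 \<le> f4 \<omega>" by (auto simp: f1_def f2_def f3_def f4_def)
    have "exp (W \<omega>) \<le> f1 \<omega> \<or> exp (W \<omega>) \<le> f2 \<omega> \<or> exp (W \<omega>) \<le> f3 \<omega> \<or> exp (W \<omega>) \<le> f4 \<omega>"
    proof -
      have "\<not> \<bar>Ssum i n \<omega> / real n - a\<bar> < rho \<or> \<not> \<bar>Ssum j m \<omega> / real m - b\<bar> < rho"
        using False \<omega> by (auto simp: B_def)
      then consider "Ssum i n \<omega> \<ge> real n * (a + rho)" | "Ssum i n \<omega> \<le> real n * (a - rho)"
        | "Ssum j m \<omega> \<ge> real m * (b + rho)" | "Ssum j m \<omega> \<le> real m * (b - rho)"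
        using n m by (auto simp: abs_less_iff not_less field_simps)
      then show ?thesis
      proof cases
        case 1
        then have "0 \<le> h * (Ssum i n \<omega> - real n * (a + rho))" using h by simp
        then have "W \<omega> \<le> (ei + h) * Ssum i n \<omega> + ej * Ssum j m \<omega> + (- h * real n * (a + rho))"
          unfolding W_def by (simp add: algebra_simps)
        then show ?thesis unfolding f1_def by simp
      next
        case 2
        then have "0 \<le> h * (real n * (a - rho) - Ssum i n \<omega>)" using h by simp
        then have "W \<omega> \<le> (ei - h) * Ssum i n \<omega> + ej * Ssum j m \<omega> + h * real n * (a - rho)"
          unfolding W_def by (simp add: algebra_simps)
        then show ?thesis unfolding f2_def by simp
      next
        case 3
        then have "0 \<le> h * (Ssum j m \<omega> - real m * (b + rho))" using h by simp
        then have "W \<omega> \<le> ei * Ssum i n \<omega> + (ej + h) * Ssum j m \<omega> + (- h * real m * (b + rho))"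
          unfolding W_def by (simp add: algebra_simps)
        then show ?thesis unfolding f3_def by simp
      next
        case 4
        then have "0 \<le> h * (real m * (b - rho) - Ssum j m \<omega>)" using h by simp
        then have "W \<omega> \<le> ei * Ssum i n \<omega> + (ej - h) * Ssum j m \<omega> + h * real m * (b - rho)"
          unfolding W_def by (simp add: algebra_simps)
        then show ?thesis unfolding f4_def by simp
      qed
    qed
    then show ?thesis using nn False by auto
  qed
  have onB: "W \<omega> \<le> c" if "\<omega> \<in> B" for \<omega>
  proof -
    have bi: "\<bar>Ssum i n \<omega> / real n - a\<bar> < rho" and bj: "\<bar>Ssum j m \<omega> / real m - b\<bar> < rho"
      using that by (auto simp: B_def)
    have gi: "ei * (Ssum i n \<omega> / real n) \<le> ei * a + \<bar>ei\<bar> * rho"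
    proof -
      have "ei * (Ssum i n \<omega> / real n) - ei * a = ei * (Ssum i n \<omega> / real n - a)" by (simp add: algebra_simps)
      also have "\<dots> \<le> \<bar>ei\<bar> * \<bar>Ssum i n \<omega> / real n - a\<bar>" by (metis abs_ge_self abs_mult)
      also have "\<dots> \<le> \<bar>ei\<bar> * rho" using bi by (intro mult_left_mono) auto
      finally show ?thesis by simp
    qed
    have gj: "ej * (Ssum j m \<omega> / real m) \<le> ej * b + \<bar>ej\<bar> * rho"
    proof -
      have "ej * (Ssum j m \<omega> / real m) - ej * b = ej * (Ssum j m \<omega> / real m - b)" by (simp add: algebra_simps)
      also have "\<dots> \<le> \<bar>ej\<bar> * \<bar>Ssum j m \<omega> / real m - b\<bar>" by (metis abs_ge_self abs_mult)
      also have "\<dots> \<le> \<bar>ej\<bar> * rho" using bj by (intro mult_left_mono) auto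
      finally show ?thesis by simp
    qed
    have "ei * Ssum i n \<omega> = real n * (ei * (Ssum i n \<omega> / real n))" using n by simp
    also have "\<dots> \<le> real n * (ei * a + \<bar>ei\<bar> * rho)" using gi by (intro mult_left_mono) auto
    finally have si: "ei * Ssum i n \<omega> \<le> real n * (ei * a + \<bar>ei\<bar> * rho)" .
    have "ej * Ssum j m \<omega> = real m * (ej * (Ssum j m \<omega> / real m))" using m by simp
    also have "\<dots> \<le> real m * (ej * b + \<bar>ej\<bar> * rho)" using gj by (intro mult_left_mono) auto
    finally have sj: "ej * Ssum j m \<omega> \<le> real m * (ej * b + \<bar>ej\<bar> * rho)" .
    show ?thesis using si sj by (simp add: W_def c_def)
  qed
  have "exp (- c) * (K - 2 * (K * q ^ n) - 2 * (K * q ^ m))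
      \<le> exp (- c) * ((\<integral>\<omega>. exp (W \<omega>) \<partial>M) - ((\<integral>\<omega>. f1 \<omega> \<partial>M) + (\<integral>\<omega>. f2 \<omega> \<partial>M) + (\<integral>\<omega>. f3 \<omega> \<partial>M) + (\<integral>\<omega>. f4 \<omega> \<partial>M)))"
    using v1 v2 v3 v4 vW by (intro mult_left_mono) auto
  also have "\<dots> \<le> exp (- c) * (\<integral>\<omega>. exp (W \<omega>) * indicator B \<omega> \<partial>M)"
  proof (intro mult_left_mono)
    have "(\<integral>\<omega>. exp (W \<omega>) \<partial>M) \<le> (\<integral>\<omega>. exp (W \<omega>) * indicator B \<omega> + (f1 \<omega> + f2 \<omega> + f3 \<omega> + f4 \<omega>) \<partial>M)"
      using iW iWB i1 i2 i3 i4 pw by (intro integral_mono) auto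
    also have "\<dots> = (\<integral>\<omega>. exp (W \<omega>) * indicator B \<omega> \<partial>M) + ((\<integral>\<omega>. f1 \<omega> \<partial>M) + (\<integral>\<omega>. f2 \<omega> \<partial>M) + (\<integral>\<omega>. f3 \<omega> \<partial>M) + (\<integral>\<omega>. f4 \<omega> \<partial>M))"
      using iWB i1 i2 i3 i4 by simp
    finally show "(\<integral>\<omega>. exp (W \<omega>) \<partial>M) - ((\<integral>\<omega>. f1 \<omega> \<partial>M) + (\<integral>\<omega>. f2 \<omega> \<partial>M) + (\<integral>\<omega>. f3 \<omega> \<partial>M) + (\<integral>\<omega>. f4 \<omega> \<partial>M))
        \<le> (\<integral>\<omega>. exp (W \<omega>) * indicator B \<omega> \<partial>M)" by simp
  qed simp
  also have "\<dots> = (\<integral>\<omega>. exp (- c) * (exp (W \<omega>) * indicator B \<omega>) \<partial>M)" by simp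
  also have "\<dots> \<le> (\<integral>\<omega>. indicator B \<omega> \<partial>M)"
  proof (rule integral_mono)
    show "integrable M (\<lambda>\<omega>. exp (- c) * (exp (W \<omega>) * indicator B \<omega>))" using iWB by simp
    show "integrable M (indicator B :: 'a \<Rightarrow> real)" using Bm by (simp add: integrable_indicator_iff emeasure_eq_measure)
    fix \<omega> show "exp (- c) * (exp (W \<omega>) * indicator B \<omega>) \<le> indicator B \<omega>"
    proof (cases "\<omega> \<in> B")
      case True
      have "exp (- c) * exp (W \<omega>) = exp (W \<omega> - c)" by (simp add: exp_diff exp_minus field_simps)
      also have "\<dots> \<le> 1" using onB[OF True] by simp
      finally show ?thesis using True by simp
    qed simp
  qed
  also have "\<dots> = measure M B" using Bm by (simp add: sets.Int_space_eq2)
  finally have main: "exp (- c) * (K - 2 * (K * q ^ n) - 2 * (K * q ^ m)) \<le> measure M B" .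
  have "exp (- c) * (K - 2 * (K * q ^ n) - 2 * (K * q ^ m)) = (exp (- c) * K) * (1 - 2 * q ^ n - 2 * q ^ m)"
    by (simp add: algebra_simps)
  moreover have "exp (- c) * K = exp (- real n * (ei * a - L i ei + \<bar>ei\<bar> * rho) - real m * (ej * b - L j ej + \<bar>ej\<bar> * rho))"
    unfolding K_def c_def by (simp add: exp_add[symmetric] algebra_simps)
  ultimately show ?thesis using main unfolding B_def by simp
qed

end


lemma ceil_bounds:
  assumes r: "r > 0" and T: "T > 0"
  shows "r * T \<le> real (nat \<lceil>r * T\<rceil>)" "real (nat \<lceil>r * T\<rceil>) \<le> r * T + 1" "nat \<lceil>r * T\<rceil> > 0"
proof -
  have p: "r * T > 0" using r T by simp
  show "r * T \<le> real (nat \<lceil>r * T\<rceil>)" using p by linarith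
  show "real (nat \<lceil>r * T\<rceil>) \<le> r * T + 1" using p by linarith
  show "nat \<lceil>r * T\<rceil> > 0" using p by linarith
qed

lemma ceil_mult:
  assumes r: "r > 0" and T: "T > 0"
  shows "real (nat \<lceil>r * T\<rceil>) * c \<le> r * T * c + \<bar>c\<bar>"
proof (cases "c \<ge> 0")
  case True
  have "real (nat \<lceil>r * T\<rceil>) * c \<le> (r * T + 1) * c"
    using ceil_bounds(2)[OF r T] True by (intro mult_right_mono) auto
  then show ?thesis using True by (simp add: algebra_simps)
next
  case False
  have "real (nat \<lceil>r * T\<rceil>) * c \<le> (r * T) * c"
    using ceil_bounds(1)[OF r T] False by (intro mult_right_mono_neg) auto
  then show ?thesis by simp
qed

lemma ceil_mult_nonneg:
  assumes r: "r > 0" and T: "T > 0" and c: "c \<ge> 0"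
  shows "real (nat \<lceil>r * T\<rceil>) * c \<le> r * T * c + c"
  using ceil_mult[OF r T, of c] c by simp

context ldp
begin

lemma L_quad:
  assumes l: "l \<in> {1..k}" and e: "e \<in> interior (Dm l)"
  shows "\<exists>d0>0. \<exists>K\<ge>0. \<forall>h. \<bar>h\<bar> \<le> d0 \<longrightarrow> e + h \<in> Dm l \<and> L l (e + h) - L l e - h * tm l e \<le> K * h\<^sup>2"
proof -
  obtain r where r: "r > 0" "ball e r \<subseteq> Dm l" using e mem_interior by blast
  define d where "d = r / 3"
  have d: "d > 0" using r by (simp add: d_def)
  have ball: "e + h \<in> Dm l" if "\<bar>h\<bar> \<le> 2 * d" for h
    using that r unfolding d_def by (intro subsetD[OF r(2)]) (auto simp: dist_real_def)
  define K0 where "K0 = 2 / d\<^sup>2 * (\<integral>\<omega>. exp (e * X l 0 \<omega>) * exp ((2 * d) * \<bar>X l 0 \<omega>\<bar>) \<partial>M)"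
  have qb: "\<bar>Mg l (e + h) - Mg l e - h * M1 l e\<bar> \<le> h\<^sup>2 * K0" if "\<bar>h\<bar> \<le> d" for h
    unfolding K0_def by (rule quad_bound[OF l d ball that])
  have eD: "e \<in> Dm l" using e interior_subset by blast
  have pe: "Mg l e > 0" by (rule Mg_pos[OF l eD])
  have K0: "K0 \<ge> 0" unfolding K0_def by (intro mult_nonneg_nonneg integral_nonneg) auto
  define K where "K = K0 / Mg l e"
  have K: "K \<ge> 0" using K0 pe by (simp add: K_def)
  have "\<forall>h. \<bar>h\<bar> \<le> d \<longrightarrow> e + h \<in> Dm l \<and> L l (e + h) - L l e - h * tm l e \<le> K * h\<^sup>2"
  proof (intro allI impI conjI)
    fix h :: real assume h: "\<bar>h\<bar> \<le> d"
    show eh: "e + h \<in> Dm l" using ball h d by simp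
    have ph: "Mg l (e + h) > 0" by (rule Mg_pos[OF l eh])
    have "Mg l (e + h) \<le> Mg l e + h * M1 l e + h\<^sup>2 * K0" using qb[OF h] by linarith
    also have "\<dots> = Mg l e * (1 + (h * tm l e + K * h\<^sup>2))"
      using pe by (simp add: tm_def K_def field_simps)
    finally have le: "Mg l (e + h) \<le> Mg l e * (1 + (h * tm l e + K * h\<^sup>2))" .
    have pos: "1 + (h * tm l e + K * h\<^sup>2) > 0"
    proof -
      have "Mg l e * (1 + (h * tm l e + K * h\<^sup>2)) > 0" using ph le by linarith
      then show ?thesis using pe by (simp add: zero_less_mult_iff)
    qed
    have "L l (e + h) \<le> ln (Mg l e * (1 + (h * tm l e + K * h\<^sup>2)))"
      unfolding L_def using ph le by (subst ln_le_cancel_iff) (auto simp: pos pe)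
    also have "\<dots> = L l e + ln (1 + (h * tm l e + K * h\<^sup>2))"
      using pe pos by (simp add: ln_mult L_def)
    also have "ln (1 + (h * tm l e + K * h\<^sup>2)) \<le> h * tm l e + K * h\<^sup>2"
      using ln_le_minus_one[OF pos] by simp
    finally show "L l (e + h) - L l e - h * tm l e \<le> K * h\<^sup>2" by simp
  qed
  then show ?thesis using d K by blast
qed

lemma tilt_q:
  assumes l: "l \<in> {1..k}" and e: "e \<in> interior (Dm l)" and rho: "rho > 0"
  shows "\<exists>h0>0. \<forall>h. 0 < h \<and> h \<le> h0 \<longrightarrow> e + h \<in> Dm l \<and> e - h \<in> Dm l \<and>
     L l (e + h) - L l e - h * (tm l e + rho) \<le> - (h * rho / 2) \<and>
     L l (e - h) - L l e + h * (tm l e - rho) \<le> - (h * rho / 2)"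
proof -
  obtain d0 K where d0: "d0 > 0" and K: "K \<ge> 0"
    and q: "\<And>h. \<bar>h\<bar> \<le> d0 \<Longrightarrow> e + h \<in> Dm l \<and> L l (e + h) - L l e - h * tm l e \<le> K * h\<^sup>2"
    using L_quad[OF l e] by blast
  define h0 where "h0 = min d0 (rho / (2 * K + 1))"
  have h0: "h0 > 0" using d0 rho K by (simp add: h0_def)
  have "\<forall>h. 0 < h \<and> h \<le> h0 \<longrightarrow> e + h \<in> Dm l \<and> e - h \<in> Dm l \<and>
     L l (e + h) - L l e - h * (tm l e + rho) \<le> - (h * rho / 2) \<and>
     L l (e - h) - L l e + h * (tm l e - rho) \<le> - (h * rho / 2)"
  proof (intro allI impI)
    fix h :: real assume h: "0 < h \<and> h \<le> h0"
    have hd: "\<bar>h\<bar> \<le> d0" "\<bar>-h\<bar> \<le> d0" using h by (auto simp: h0_def)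
    have hK: "K * h \<le> rho / 2"
    proof -
      have "h \<le> rho / (2 * K + 1)" using h by (simp add: h0_def)
      then have "h * (2 * K + 1) \<le> rho" using K by (simp add: field_simps)
      then show ?thesis using h K by (simp add: algebra_simps)
    qed
    have Kh2: "K * h\<^sup>2 \<le> h * rho / 2"
    proof -
      have "K * h\<^sup>2 = h * (K * h)" by (simp add: power2_eq_square)
      also have "\<dots> \<le> h * (rho / 2)" using hK h by (intro mult_left_mono) auto
      finally show ?thesis by simp
    qed
    have p: "e + h \<in> Dm l" "L l (e + h) - L l e - h * tm l e \<le> K * h\<^sup>2" using q[OF hd(1)] by auto
    have m: "e + - h \<in> Dm l" "L l (e + - h) - L l e - (- h) * tm l e \<le> K * (- h)\<^sup>2" using q[OF hd(2)] by auto
    show "e + h \<in> Dm l \<and> e - h \<in> Dm l \<and>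
     L l (e + h) - L l e - h * (tm l e + rho) \<le> - (h * rho / 2) \<and>
     L l (e - h) - L l e + h * (tm l e - rho) \<le> - (h * rho / 2)"
      using p m Kh2 by (simp add: algebra_simps)
  qed
  then show ?thesis using h0 by blast
qed

end

locale pair = ldp2 +
  fixes i j :: nat and ri rj Ai Aj d :: real
  assumes i: "i \<in> {1..k}" and j: "j \<in> {1..k}" and ij: "i \<noteq> j"
    and ri: "ri > 0" and rj: "rj > 0"
    and mij: "mu j < mu i" and mui: "mu i \<in> {lo..hi}" and muj: "mu j \<in> {lo..hi}"
    and gi: "good i Ai d" and gj: "good j Aj d"
begin

definition Phi :: "real \<Rightarrow> real" where
  "Phi x = ri * R i x + rj * R j x"

definition gg :: real where
  "gg = real_of_ereal (Grate (Lam i) (Lam j) ri rj)"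

lemma d_pos: "d > 0" using gi by (simp add: good_def)

lemma mu_J: "x \<in> {mu j..mu i} \<Longrightarrow> x \<in> {lo-d..hi+d}"
  using mui muj d_pos by auto

lemma term_eq:
  assumes x: "x \<in> {lo-d..hi+d}"
  shows "ereal ri * legendre (Lam i) x + ereal rj * legendre (Lam j) x = ereal (Phi x)"
  using good_R(1)[OF i gi x] good_R(1)[OF j gj x] by (simp add: Phi_def)

lemma G_le: "x \<in> {lo-d..hi+d} \<Longrightarrow> Grate (Lam i) (Lam j) ri rj \<le> ereal (Phi x)"
proof -
  assume x: "x \<in> {lo-d..hi+d}"
  show ?thesis unfolding Grate_def by (rule INF_lower2[where i=x]) (simp_all add: term_eq[OF x])
qed

lemma G_nonneg: "0 \<le> Grate (Lam i) (Lam j) ri rj"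
  unfolding Grate_def
proof (rule INF_greatest)
  fix x :: real
  have "0 \<le> ereal ri * legendre (Lam i) x" using legendre_nonneg[OF i, of x] ri by simp
  moreover have "0 \<le> ereal rj * legendre (Lam j) x" using legendre_nonneg[OF j, of x] rj by simp
  ultimately show "0 \<le> ereal ri * legendre (Lam i) x + ereal rj * legendre (Lam j) x" by simp
qed

lemma G_eq: "Grate (Lam i) (Lam j) ri rj = ereal gg"
proof -
  have "Grate (Lam i) (Lam j) ri rj \<le> ereal (Phi (mu i))" using G_le mu_J mij by simp
  then show ?thesis using G_nonneg unfolding gg_def
    by (cases "Grate (Lam i) (Lam j) ri rj") auto
qed

lemma gg_le: "x \<in> {lo-d..hi+d} \<Longrightarrow> gg \<le> Phi x"
  using G_le G_eq by simp

lemma gg_nonneg: "0 \<le> gg" using G_nonneg G_eq by (simp add: zero_ereal_def)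

lemma gg_approx:
  assumes eps: "eps > 0"
  shows "\<exists>y\<in>{mu j..mu i}. Phi y < gg + eps"
proof -
  have "Grate (Lam i) (Lam j) ri rj < ereal (gg + eps)" using G_eq eps by simp
  then obtain x where x: "ereal ri * legendre (Lam i) x + ereal rj * legendre (Lam j) x < ereal (gg + eps)"
    unfolding Grate_def by (auto simp: INF_less_iff)
  define y where "y = max (mu j) (min (mu i) x)"
  have y: "y \<in> {mu j..mu i}" using mij by (auto simp: y_def)
  have li: "legendre (Lam i) y \<le> legendre (Lam i) x"
  proof (cases "x \<le> mu i")
    case True
    then have "y = max (mu j) x" by (simp add: y_def)
    show ?thesis
    proof (cases "x \<le> mu j")
      case True
      then have "y = mu j" using \<open>y = max (mu j) x\<close> by simp
      then show ?thesis using legendre_mono_down[OF i, of y x] True mij by simp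
    next
      case False
      then show ?thesis using \<open>y = max (mu j) x\<close> by simp
    qed
  next
    case False
    then have "y = mu i" using mij by (simp add: y_def)
    then show ?thesis using legendre_mono_up[OF i, of y x] False by simp
  qed
  have lj: "legendre (Lam j) y \<le> legendre (Lam j) x"
  proof (cases "x \<le> mu i")
    case True
    then have "y = max (mu j) x" by (simp add: y_def)
    show ?thesis
    proof (cases "x \<le> mu j")
      case True
      then have "y = mu j" using \<open>y = max (mu j) x\<close> by simp
      then show ?thesis using legendre_mono_down[OF j, of y x] True by simp
    next
      case False
      then show ?thesis using \<open>y = max (mu j) x\<close> by simp
    qed
  next
    case False
    then have "y = mu i" using mij by (simp add: y_def)
    then show ?thesis using legendre_mono_up[OF j, of y x] False mij by simp
  qed
  have "ereal (Phi y) = ereal ri * legendre (Lam i) y + ereal rj * legendre (Lam j) y"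
    using term_eq[OF mu_J[OF y]] by simp
  also have "\<dots> \<le> ereal ri * legendre (Lam i) x + ereal rj * legendre (Lam j) x"
    using li lj ri rj by (intro add_mono ereal_mult_left_mono) auto
  also have "\<dots> < ereal (gg + eps)" by (rule x)
  finally show ?thesis using y by auto
qed

end


context pair
begin

definition nI :: "real \<Rightarrow> nat" where "nI T = nat \<lceil>ri * T\<rceil>"
definition nJ :: "real \<Rightarrow> nat" where "nJ T = nat \<lceil>rj * T\<rceil>"

definition EvE :: "real \<Rightarrow> 'a set" where
  "EvE T = {\<omega> \<in> space M. smean (X i) (nI T) \<omega> \<le> smean (X j) (nJ T) \<omega>}"

lemma EvE_meas: "EvE T \<in> sets M"
proof -
  have [measurable]: "Ssum i (nI T) \<in> borel_measurable M" "Ssum j (nJ T) \<in> borel_measurable M"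
    using i j by auto
  show ?thesis unfolding EvE_def smean_Ssum by measurable
qed

lemma piece_bound:
  assumes a: "a \<in> Dm i" and b: "b \<in> Dm j"
    and A: "\<And>T. A T \<in> sets M"
    and hA: "\<And>T \<omega>. T > 0 \<Longrightarrow> \<omega> \<in> A T \<Longrightarrow>
       0 \<le> a * (Ssum i (nI T) \<omega> - real (nI T) * u) + b * (Ssum j (nJ T) \<omega> - real (nJ T) * v)"
    and T: "T > 0"
  shows "measure M (A T) \<le> exp (\<bar>L i a - a * u\<bar> + \<bar>L j b - b * v\<bar> + T * (ri * (L i a - a * u) + rj * (L j b - b * v)))"
proof -
  have "measure M (A T) \<le> exp (real (nI T) * (L i a - a * u) + real (nJ T) * (L j b - b * v))"
    by (rule chernoff[OF i j ij a b A]) (rule hA[OF T])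
  also have "\<dots> \<le> exp (\<bar>L i a - a * u\<bar> + \<bar>L j b - b * v\<bar> + T * (ri * (L i a - a * u) + rj * (L j b - b * v)))"
  proof -
    have "real (nI T) * (L i a - a * u) \<le> ri * T * (L i a - a * u) + \<bar>L i a - a * u\<bar>"
      unfolding nI_def by (rule ceil_mult[OF ri T])
    moreover have "real (nJ T) * (L j b - b * v) \<le> rj * T * (L j b - b * v) + \<bar>L j b - b * v\<bar>"
      unfolding nJ_def by (rule ceil_mult[OF rj T])
    ultimately show ?thesis by (simp add: algebra_simps)
  qed
  finally show ?thesis .
qed

lemma rate_piece:
  assumes u: "u \<in> {lo-d..hi+d}" and v: "v \<in> {lo-d..hi+d}" and um: "u \<le> mu i" and vm: "mu j \<le> v"
    and eps: "eps > 0"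
    and A: "\<And>T. A T \<in> sets M"
    and hA: "\<And>T \<omega>. T > 0 \<Longrightarrow> \<omega> \<in> A T \<Longrightarrow>
       Ssum i (nI T) \<omega> \<le> real (nI T) * u \<and> Ssum j (nJ T) \<omega> \<ge> real (nJ T) * v"
  shows "\<exists>C. \<forall>T>0. measure M (A T) \<le> exp (C - T * (ri * R i u + rj * R j v - eps))"
proof -
  define e' where "e' = eps / (ri + rj)"
  have e': "e' > 0" using eps ri rj by (simp add: e'_def)
  obtain a where a: "a \<in> Dm i" "a \<le> 0" "a * u - L i a > R i u - e'" using R_neg[OF i gi u e' um] by blast
  obtain b where b: "b \<in> Dm j" "b \<ge> 0" "b * v - L j b > R j v - e'" using R_pos[OF j gj v e' vm] by blast
  define C where "C = \<bar>L i a - a * u\<bar> + \<bar>L j b - b * v\<bar>"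
  have "measure M (A T) \<le> exp (C - T * (ri * R i u + rj * R j v - eps))" if T: "T > 0" for T
  proof -
    have "measure M (A T) \<le> exp (C + T * (ri * (L i a - a * u) + rj * (L j b - b * v)))"
      unfolding C_def
    proof (rule piece_bound[OF a(1) b(1) A _ T])
      fix T' \<omega> assume T': "T' > 0" and w: "\<omega> \<in> A T'"
      have s: "Ssum i (nI T') \<omega> \<le> real (nI T') * u" "Ssum j (nJ T') \<omega> \<ge> real (nJ T') * v"
        using hA[OF T' w] by auto
      have "0 \<le> a * (Ssum i (nI T') \<omega> - real (nI T') * u)" using a(2) s(1) by (simp add: mult_nonpos_nonpos)
      moreover have "0 \<le> b * (Ssum j (nJ T') \<omega> - real (nJ T') * v)" using b(2) s(2) by simp
      ultimately show "0 \<le> a * (Ssum i (nI T') \<omega> - real (nI T') * u) + b * (Ssum j (nJ T') \<omega> - real (nJ T') * v)"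
        by simp
    qed
    also have "\<dots> \<le> exp (C - T * (ri * R i u + rj * R j v - eps))"
    proof -
      have "ri * (L i a - a * u) \<le> ri * (e' - R i u)" using a(3) ri by (intro mult_left_mono) auto
      moreover have "rj * (L j b - b * v) \<le> rj * (e' - R j v)" using b(3) rj by (intro mult_left_mono) auto
      ultimately have "ri * (L i a - a * u) + rj * (L j b - b * v) \<le> (ri + rj) * e' - (ri * R i u + rj * R j v)"
        by (simp add: algebra_simps)
      also have "(ri + rj) * e' = eps" using ri rj by (simp add: e'_def)
      finally have "T * (ri * (L i a - a * u) + rj * (L j b - b * v)) \<le> T * (eps - (ri * R i u + rj * R j v))"
        using T by (intro mult_left_mono) auto
      then show ?thesis by (simp add: algebra_simps)
    qed
    finally show ?thesis .
  qed
  then show ?thesis by blast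
qed

lemma rate_left:
  assumes u: "u \<in> {lo-d..hi+d}" and um: "u \<le> mu i" and eps: "eps > 0"
    and A: "\<And>T. A T \<in> sets M"
    and hA: "\<And>T \<omega>. T > 0 \<Longrightarrow> \<omega> \<in> A T \<Longrightarrow> Ssum i (nI T) \<omega> \<le> real (nI T) * u"
  shows "\<exists>C. \<forall>T>0. measure M (A T) \<le> exp (C - T * (ri * R i u - eps))"
proof -
  define e' where "e' = eps / ri"
  have e': "e' > 0" using eps ri by (simp add: e'_def)
  obtain a where a: "a \<in> Dm i" "a \<le> 0" "a * u - L i a > R i u - e'" using R_neg[OF i gi u e' um] by blast
  define C where "C = \<bar>L i a - a * u\<bar> + \<bar>L j 0 - 0 * v\<bar>"
  have "measure M (A T) \<le> exp (C - T * (ri * R i u - eps))" if T: "T > 0" for T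
  proof -
    have "measure M (A T) \<le> exp (C + T * (ri * (L i a - a * u) + rj * (L j 0 - 0 * v)))"
      unfolding C_def
    proof (rule piece_bound[OF a(1) Dm0 A _ T])
      fix T' \<omega> assume T': "T' > 0" and w: "\<omega> \<in> A T'"
      have s: "Ssum i (nI T') \<omega> \<le> real (nI T') * u" using hA[OF T' w] by auto
      have "0 \<le> a * (Ssum i (nI T') \<omega> - real (nI T') * u)" using a(2) s(1) by (simp add: mult_nonpos_nonpos)
      then show "0 \<le> a * (Ssum i (nI T') \<omega> - real (nI T') * u) + 0 * (Ssum j (nJ T') \<omega> - real (nJ T') * v)"
        by simp
    qed
    also have "\<dots> \<le> exp (C - T * (ri * R i u - eps))"
    proof -
      have "ri * (L i a - a * u) \<le> ri * (e' - R i u)" using a(3) ri by (intro mult_left_mono) auto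
      also have "\<dots> = eps - ri * R i u" using ri by (simp add: e'_def algebra_simps)
      finally have "T * (ri * (L i a - a * u) + rj * (L j 0 - 0 * v)) \<le> T * (eps - ri * R i u)"
        using T by (intro mult_left_mono) (auto simp: L0)
      then show ?thesis by (simp add: algebra_simps)
    qed
    finally show ?thesis .
  qed
  then show ?thesis by blast
qed

lemma rate_right:
  assumes v: "v \<in> {lo-d..hi+d}" and vm: "mu j \<le> v" and eps: "eps > 0"
    and A: "\<And>T. A T \<in> sets M"
    and hA: "\<And>T \<omega>. T > 0 \<Longrightarrow> \<omega> \<in> A T \<Longrightarrow> Ssum j (nJ T) \<omega> \<ge> real (nJ T) * v"
  shows "\<exists>C. \<forall>T>0. measure M (A T) \<le> exp (C - T * (rj * R j v - eps))"
proof -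
  define e' where "e' = eps / rj"
  have e': "e' > 0" using eps rj by (simp add: e'_def)
  obtain b where b: "b \<in> Dm j" "b \<ge> 0" "b * v - L j b > R j v - e'" using R_pos[OF j gj v e' vm] by blast
  define C where "C = \<bar>L i 0 - 0 * u\<bar> + \<bar>L j b - b * v\<bar>"
  have "measure M (A T) \<le> exp (C - T * (rj * R j v - eps))" if T: "T > 0" for T
  proof -
    have "measure M (A T) \<le> exp (C + T * (ri * (L i 0 - 0 * u) + rj * (L j b - b * v)))"
      unfolding C_def
    proof (rule piece_bound[OF Dm0 b(1) A _ T])
      fix T' \<omega> assume T': "T' > 0" and w: "\<omega> \<in> A T'"
      have s: "Ssum j (nJ T') \<omega> \<ge> real (nJ T') * v" using hA[OF T' w] by auto
      have "0 \<le> b * (Ssum j (nJ T') \<omega> - real (nJ T') * v)" using b(2) s by simp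
      then show "0 \<le> 0 * (Ssum i (nI T') \<omega> - real (nI T') * u) + b * (Ssum j (nJ T') \<omega> - real (nJ T') * v)"
        by simp
    qed
    also have "\<dots> \<le> exp (C - T * (rj * R j v - eps))"
    proof -
      have "rj * (L j b - b * v) \<le> rj * (e' - R j v)" using b(3) rj by (intro mult_left_mono) auto
      also have "\<dots> = eps - rj * R j v" using rj by (simp add: e'_def algebra_simps)
      finally have "T * (ri * (L i 0 - 0 * u) + rj * (L j b - b * v)) \<le> T * (eps - rj * R j v)"
        using T by (intro mult_left_mono) (auto simp: L0)
      then show ?thesis by (simp add: algebra_simps)
    qed
    finally show ?thesis .
  qed
  then show ?thesis by blast
qed

lemma cover:
  assumes T: "T > 0" and N: "N > 0" and dl: "dl = (mu i - mu j) / real N"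
    and w: "\<omega> \<in> EvE T"
  shows "\<omega> \<in> {\<omega> \<in> space M. Ssum i (nI T) \<omega> \<le> real (nI T) * mu j}
       \<or> \<omega> \<in> {\<omega> \<in> space M. Ssum j (nJ T) \<omega> \<ge> real (nJ T) * mu i}
       \<or> (\<exists>q\<in>{1..N}. \<omega> \<in> {\<omega> \<in> space M. Ssum i (nI T) \<omega> \<le> real (nI T) * (mu j + real q * dl)
                               \<and> Ssum j (nJ T) \<omega> \<ge> real (nJ T) * (mu j + real (q - 1) * dl)})"
proof -
  have n: "nI T > 0" unfolding nI_def by (rule ceil_bounds(3)[OF ri T])
  have m: "nJ T > 0" unfolding nJ_def by (rule ceil_bounds(3)[OF rj T])
  define Y where "Y = Ssum i (nI T) \<omega> / real (nI T)"
  define Z where "Z = Ssum j (nJ T) \<omega> / real (nJ T)"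
  have sp: "\<omega> \<in> space M" and YZ: "Y \<le> Z" using w by (auto simp: EvE_def smean_Ssum Y_def Z_def)
  have SY: "Ssum i (nI T) \<omega> = real (nI T) * Y" using n by (simp add: Y_def)
  have SZ: "Ssum j (nJ T) \<omega> = real (nJ T) * Z" using m by (simp add: Z_def)
  have dlp: "dl > 0" using dl mij N by simp
  show ?thesis
  proof (cases "Y \<le> mu j")
    case True
    then have "Ssum i (nI T) \<omega> \<le> real (nI T) * mu j" unfolding SY by (intro mult_left_mono) auto
    then show ?thesis using sp by blast
  next
    case c1: False
    show ?thesis
    proof (cases "Z \<ge> mu i")
      case True
      then have "Ssum j (nJ T) \<omega> \<ge> real (nJ T) * mu i" unfolding SZ by (intro mult_left_mono) auto
      then show ?thesis using sp by blast
    next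
      case c2: False
      define t where "t = (Y - mu j) / dl"
      define q where "q = nat \<lceil>t\<rceil>"
      have t0: "t > 0" using c1 dlp by (simp add: t_def)
      have tN: "t < real N"
      proof -
        have "Y - mu j < mu i - mu j" using c2 YZ by simp
        then have "t < (mu i - mu j) / dl" using dlp unfolding t_def by (simp add: divide_strict_right_mono)
        also have "(mu i - mu j) / dl = real N" using dl N mij by simp
        finally show ?thesis .
      qed
      have qN: "q \<le> N" using tN by (simp add: q_def nat_le_iff ceiling_le_iff)
      have qt: "t \<le> real q" unfolding q_def by (rule real_nat_ceiling_ge)
      have q1: "q \<ge> 1" using qt t0 by (cases q) auto
      have qt2: "real q - 1 < t" using t0 by (simp add: q_def) linarith
      have rq1: "real (q - 1) = real q - 1" using q1 by simp
      have Yle: "Y \<le> mu j + real q * dl"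
      proof -
        have "Y - mu j = t * dl" using dlp by (simp add: t_def)
        also have "\<dots> \<le> real q * dl" using qt dlp by (intro mult_right_mono) auto
        finally show ?thesis by simp
      qed
      have Zge: "mu j + real (q - 1) * dl \<le> Z"
      proof -
        have "(real q - 1) * dl \<le> t * dl" using qt2 dlp by (intro mult_right_mono) auto
        also have "t * dl = Y - mu j" using dlp by (simp add: t_def)
        finally show ?thesis using YZ rq1 by simp
      qed
      have "Ssum i (nI T) \<omega> \<le> real (nI T) * (mu j + real q * dl)" unfolding SY using Yle by (intro mult_left_mono) auto
      moreover have "Ssum j (nJ T) \<omega> \<ge> real (nJ T) * (mu j + real (q - 1) * dl)" unfolding SZ using Zge by (intro mult_left_mono) auto
      ultimately show ?thesis using sp q1 qN by auto
    qed
  qed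
qed

lemma upper:
  assumes eps: "eps > 0"
  shows "\<exists>C. \<forall>T>0. measure M (EvE T) \<le> exp (C - T * (gg - eps))"
proof -
  have [measurable]: "Ssum i n \<in> borel_measurable M" "Ssum j n \<in> borel_measurable M" for n
    using i j by auto
  define e2 where "e2 = eps / 2"
  have e2: "e2 > 0" using eps by (simp add: e2_def)
  define Ci where "Ci = (Ai + 1) / d"
  have Ci: "Ci \<ge> 0" using gi d_pos by (simp add: Ci_def good_def)
  define N where "N = nat \<lceil>(mu i - mu j) * ri * Ci / e2\<rceil> + 1"
  have N: "N > 0" by (simp add: N_def)
  define dl where "dl = (mu i - mu j) / real N"
  have dlp: "dl > 0" using mij N by (simp add: dl_def)
  have dlC: "ri * Ci * dl \<le> e2"
  proof -
    have "(mu i - mu j) * ri * Ci / e2 \<le> real N" unfolding N_def by linarith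
    then have "(mu i - mu j) * ri * Ci \<le> real N * e2" using e2 by (simp add: field_simps)
    then have "(mu i - mu j) * ri * Ci / real N \<le> e2" using N by (simp add: field_simps)
    then show ?thesis by (simp add: dl_def field_simps)
  qed
  define x where "x q = mu j + real q * dl" for q :: nat
  have xr: "x q \<in> {mu j..mu i}" if "q \<le> N" for q
  proof -
    have "real q * dl \<le> real N * dl" using that dlp by (intro mult_right_mono) auto
    also have "real N * dl = mu i - mu j" using N by (simp add: dl_def)
    finally show ?thesis using dlp by (auto simp: x_def)
  qed
  define Aq where "Aq q T = {\<omega> \<in> space M. Ssum i (nI T) \<omega> \<le> real (nI T) * x q
                               \<and> Ssum j (nJ T) \<omega> \<ge> real (nJ T) * x (q - 1)}" for q T
  define A0 where "A0 T = {\<omega> \<in> space M. Ssum i (nI T) \<omega> \<le> real (nI T) * mu j}" for T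
  define A1 where "A1 T = {\<omega> \<in> space M. Ssum j (nJ T) \<omega> \<ge> real (nJ T) * mu i}" for T
  have Aqm: "Aq q T \<in> sets M" for q T unfolding Aq_def by measurable
  have A0m: "A0 T \<in> sets M" for T unfolding A0_def by measurable
  have A1m: "A1 T \<in> sets M" for T unfolding A1_def by measurable
  have bq: "\<exists>C. \<forall>T>0. measure M (Aq q T) \<le> exp (C - T * (gg - eps))" if q: "q \<in> {1..N}" for q
  proof -
    have xq: "x q \<in> {mu j..mu i}" and xq1: "x (q - 1) \<in> {mu j..mu i}" using q xr by auto
    have hA: "Ssum i (nI T) \<omega> \<le> real (nI T) * x q \<and> Ssum j (nJ T) \<omega> \<ge> real (nJ T) * x (q - 1)"
      if "T > 0" "\<omega> \<in> Aq q T" for T \<omega> using that by (simp add: Aq_def)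
    obtain C where C: "\<forall>T>0. measure M (Aq q T) \<le> exp (C - T * (ri * R i (x q) + rj * R j (x (q - 1)) - e2))"
      using rate_piece[where A="Aq q", OF mu_J[OF xq] mu_J[OF xq1] _ _ e2 Aqm[of q] hA] xq xq1 by auto
    have rate: "ri * R i (x q) + rj * R j (x (q - 1)) - e2 \<ge> gg - eps"
    proof -
      have "R i (x (q - 1)) - (Ai + 1) / d * \<bar>x q - x (q - 1)\<bar> \<le> R i (x q)"
        by (rule R_lip[OF i gi mu_J[OF xq1] mu_J[OF xq]])
      moreover have "\<bar>x q - x (q - 1)\<bar> = dl" using q dlp by (auto simp: x_def of_nat_diff algebra_simps)
      ultimately have "R i (x (q - 1)) - Ci * dl \<le> R i (x q)" by (simp add: Ci_def)
      then have "ri * R i (x (q - 1)) - ri * Ci * dl \<le> ri * R i (x q)"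
        using ri by (metis mult.assoc mult_left_mono less_imp_le right_diff_distrib)
      moreover have "gg \<le> Phi (x (q - 1))" by (rule gg_le[OF mu_J[OF xq1]])
      ultimately show ?thesis using dlC unfolding Phi_def e2_def by linarith
    qed
    have "measure M (Aq q T) \<le> exp (C - T * (gg - eps))" if T: "T > 0" for T
    proof -
      have "T * (gg - eps) \<le> T * (ri * R i (x q) + rj * R j (x (q - 1)) - e2)"
        using rate T by (intro mult_left_mono) auto
      then show ?thesis using C T by (meson diff_left_mono exp_le_cancel_iff order_trans)
    qed
    then show ?thesis by blast
  qed
  then obtain Cf where Cf: "\<And>q T. q \<in> {1..N} \<Longrightarrow> T > 0 \<Longrightarrow> measure M (Aq q T) \<le> exp (Cf q - T * (gg - eps))"
    by metis
  have muJj: "mu j \<in> {lo-d..hi+d}" and muJi: "mu i \<in> {lo-d..hi+d}" using mu_J mij by auto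
  obtain C0 where C0: "\<forall>T>0. measure M (A0 T) \<le> exp (C0 - T * (ri * R i (mu j) - e2))"
  proof -
    have hA: "Ssum i (nI T) \<omega> \<le> real (nI T) * mu j" if "T > 0" "\<omega> \<in> A0 T" for T \<omega>
      using that by (simp add: A0_def)
    show ?thesis using rate_left[where A=A0, OF muJj _ e2 A0m hA] mij that by auto
  qed
  obtain C1 where C1: "\<forall>T>0. measure M (A1 T) \<le> exp (C1 - T * (rj * R j (mu i) - e2))"
  proof -
    have hA: "Ssum j (nJ T) \<omega> \<ge> real (nJ T) * mu i" if "T > 0" "\<omega> \<in> A1 T" for T \<omega>
      using that by (simp add: A1_def)
    show ?thesis using rate_right[where A=A1, OF muJi _ e2 A1m hA] mij that by auto
  qed
  have r0: "ri * R i (mu j) - e2 \<ge> gg - eps"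
    using gg_le[OF muJj] R_mu[OF j gj muJj] e2 unfolding Phi_def e2_def by simp
  have r1: "rj * R j (mu i) - e2 \<ge> gg - eps"
    using gg_le[OF muJi] R_mu[OF i gi muJi] e2 unfolding Phi_def e2_def by simp
  define S where "S = exp C0 + exp C1 + (\<Sum>q\<in>{1..N}. exp (Cf q))"
  have Sp: "S > 0" unfolding S_def by (intro add_pos_nonneg add_pos_pos sum_nonneg) auto
  have "measure M (EvE T) \<le> exp (ln S - T * (gg - eps))" if T: "T > 0" for T
  proof -
    have sub: "EvE T \<subseteq> A0 T \<union> A1 T \<union> (\<Union>q\<in>{1..N}. Aq q T)"
    proof
      fix \<omega> assume w: "\<omega> \<in> EvE T"
      show "\<omega> \<in> A0 T \<union> A1 T \<union> (\<Union>q\<in>{1..N}. Aq q T)"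
        using cover[OF T N dl_def w] unfolding A0_def A1_def Aq_def x_def by (elim disjE) auto
    qed
    have "measure M (EvE T) \<le> measure M (A0 T \<union> A1 T \<union> (\<Union>q\<in>{1..N}. Aq q T))"
      by (rule finite_measure_mono[OF sub]) (use A0m A1m Aqm in auto)
    also have "\<dots> \<le> measure M (A0 T \<union> A1 T) + measure M (\<Union>q\<in>{1..N}. Aq q T)"
      by (rule measure_Un_le) (use A0m A1m Aqm in auto)
    also have "\<dots> \<le> measure M (A0 T) + measure M (A1 T) + (\<Sum>q\<in>{1..N}. measure M (Aq q T))"
    proof -
      have u1: "measure M (A0 T \<union> A1 T) \<le> measure M (A0 T) + measure M (A1 T)"
        by (rule measure_Un_le[OF A0m A1m])
      have u2: "measure M (\<Union>q\<in>{1..N}. Aq q T) \<le> (\<Sum>q\<in>{1..N}. measure M (Aq q T))"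
        by (rule measure_UNION_le) (auto simp: Aqm)
      show ?thesis using u1 u2 by linarith
    qed
    also have "\<dots> \<le> exp (C0 - T * (gg - eps)) + exp (C1 - T * (gg - eps)) + (\<Sum>q\<in>{1..N}. exp (Cf q - T * (gg - eps)))"
    proof (intro add_mono sum_mono)
      have "T * (gg - eps) \<le> T * (ri * R i (mu j) - e2)" using r0 T by (intro mult_left_mono) auto
      then show "measure M (A0 T) \<le> exp (C0 - T * (gg - eps))" using C0 T by (meson diff_left_mono exp_le_cancel_iff order_trans)
      have "T * (gg - eps) \<le> T * (rj * R j (mu i) - e2)" using r1 T by (intro mult_left_mono) auto
      then show "measure M (A1 T) \<le> exp (C1 - T * (gg - eps))" using C1 T by (meson diff_left_mono exp_le_cancel_iff order_trans)
      fix q assume "q \<in> {1..N}"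
      then show "measure M (Aq q T) \<le> exp (Cf q - T * (gg - eps))" using Cf T by blast
    qed
    also have "\<dots> = S / exp (T * (gg - eps))"
      unfolding S_def by (simp add: exp_diff sum_divide_distrib add_divide_distrib)
    also have "\<dots> = exp (ln S - T * (gg - eps))" using Sp by (simp add: exp_diff)
    finally show ?thesis .
  qed
  then show ?thesis by blast
qed

end


context pair
begin

lemma pow_small:
  assumes q: "0 < q" "q < (1::real)"
  shows "\<exists>N0. \<forall>n\<ge>N0. q ^ n \<le> 1 / 8"
proof -
  have "(\<lambda>n. q ^ n) \<longlonglongrightarrow> 0" using q by (intro LIMSEQ_power_zero) simp
  then have "\<forall>\<^sub>F n in sequentially. q ^ n < 1 / 8" by (rule order_tendstoD(2)) simp
  then show ?thesis unfolding eventually_sequentially by (meson less_imp_le)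
qed

lemma lower:
  assumes eps: "eps > 0"
  shows "\<exists>C. \<forall>\<^sub>F T in at_top. exp (- C - T * (gg + eps)) \<le> measure M (EvE T)"
proof -
  have [measurable]: "Ssum i n \<in> borel_measurable M" "Ssum j n \<in> borel_measurable M" for n
    using i j by auto
  define e8 where "e8 = eps / 8"
  have e8: "e8 > 0" using eps by (simp add: e8_def)
  obtain y where y: "y \<in> {mu j..mu i}" and Py: "Phi y < gg + e8" using gg_approx[OF e8] by blast
  have ylh: "y \<in> {lo..hi}" using y mui muj by auto
  have Si: "y \<in> interior (tm i ` interior (Dm i))" using H[OF i] Fset_Lam[OF i] ylh by auto
  have Sj: "y \<in> interior (tm j ` interior (Dm j))" using H[OF j] Fset_Lam[OF j] ylh by auto
  obtain ei0 where ei0: "ei0 > 0" "ball y ei0 \<subseteq> tm i ` interior (Dm i)"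
    using Si mem_interior by (metis interior_subset subset_trans)
  obtain ej0 where ej0: "ej0 > 0" "ball y ej0 \<subseteq> tm j ` interior (Dm j)"
    using Sj mem_interior by (metis interior_subset subset_trans)
  define Ci where "Ci = (Ai + 1) / d"
  define Cj where "Cj = (Aj + 1) / d"
  have Ci: "Ci \<ge> 0" using gi d_pos by (simp add: Ci_def good_def)
  have Cj: "Cj \<ge> 0" using gj d_pos by (simp add: Cj_def good_def)
  define dl where "dl = min (min d (ei0 / 2)) (min (ej0 / 2) (e8 / (ri * Ci + rj * Cj + 1)))"
  have pc: "ri * Ci + rj * Cj + 1 > 0" using Ci Cj ri rj by (simp add: add_nonneg_pos)
  have dlp: "dl > 0" using d_pos ei0 ej0 e8 pc by (simp add: dl_def)
  have dld: "dl \<le> d" by (simp add: dl_def)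
  have dlC: "dl * (ri * Ci + rj * Cj) \<le> e8"
  proof -
    have "dl \<le> e8 / (ri * Ci + rj * Cj + 1)" by (simp add: dl_def)
    then have "dl * (ri * Ci + rj * Cj + 1) \<le> e8" using pc by (simp add: le_divide_eq)
    then show ?thesis using dlp by (simp add: algebra_simps)
  qed
  define a where "a = y - dl"
  define b where "b = y + dl"
  have "a \<in> ball y ei0" using dlp unfolding a_def dl_def by (simp add: dist_real_def) (use ei0 in linarith)
  then obtain ei where ei: "ei \<in> interior (Dm i)" "tm i ei = a" using ei0(2) by auto
  have "b \<in> ball y ej0" using dlp unfolding b_def dl_def by (simp add: dist_real_def) (use ej0 in linarith)
  then obtain ej where ej: "ej \<in> interior (Dm j)" "tm j ej = b" using ej0(2) by auto
  have aJ: "a \<in> {lo-d..hi+d}" and bJ: "b \<in> {lo-d..hi+d}" and yJ: "y \<in> {lo-d..hi+d}"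
    using ylh dld dlp d_pos by (auto simp: a_def b_def)
  have Ra: "R i a \<le> R i y + Ci * dl"
    using R_lip[OF i gi aJ yJ] dlp by (simp add: Ci_def a_def)
  have Rb: "R j b \<le> R j y + Cj * dl"
    using R_lip[OF j gj bJ yJ] dlp by (simp add: Cj_def b_def)
  have Ra': "R i a = ei * a - L i ei" using R_tm[OF i gi ei(1)] ei(2) aJ by simp
  have Rb': "R j b = ej * b - L j ej" using R_tm[OF j gj ej(1)] ej(2) bJ by simp
  have rate1: "ri * R i a + rj * R j b \<le> gg + 2 * e8"
  proof -
    have "ri * R i a \<le> ri * (R i y + Ci * dl)" using Ra ri by (intro mult_left_mono) auto
    moreover have "rj * R j b \<le> rj * (R j y + Cj * dl)" using Rb rj by (intro mult_left_mono) auto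
    ultimately have "ri * R i a + rj * R j b \<le> Phi y + dl * (ri * Ci + rj * Cj)"
      unfolding Phi_def by (simp add: algebra_simps)
    then show ?thesis using dlC Py by linarith
  qed
  define rho where "rho = min dl (e8 / (ri * \<bar>ei\<bar> + rj * \<bar>ej\<bar> + 1))"
  have rhop: "rho > 0" using dlp e8 ri rj by (simp add: rho_def add_nonneg_pos)
  have rhod: "rho \<le> dl" by (simp add: rho_def)
  have rhoe: "rho * (ri * \<bar>ei\<bar> + rj * \<bar>ej\<bar>) \<le> e8"
  proof -
    have "rho \<le> e8 / (ri * \<bar>ei\<bar> + rj * \<bar>ej\<bar> + 1)" by (simp add: rho_def)
    moreover have "ri * \<bar>ei\<bar> + rj * \<bar>ej\<bar> \<ge> 0" using ri rj by simp
    ultimately have "rho * (ri * \<bar>ei\<bar> + rj * \<bar>ej\<bar> + 1) \<le> e8"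
      by (simp add: le_divide_eq add_nonneg_pos)
    then show ?thesis using rhop by (simp add: algebra_simps)
  qed
  obtain hi0 where hi0: "hi0 > 0" and thi: "\<And>h. 0 < h \<and> h \<le> hi0 \<Longrightarrow> ei + h \<in> Dm i \<and> ei - h \<in> Dm i \<and>
     L i (ei + h) - L i ei - h * (tm i ei + rho) \<le> - (h * rho / 2) \<and>
     L i (ei - h) - L i ei + h * (tm i ei - rho) \<le> - (h * rho / 2)"
    using tilt_q[OF i ei(1) rhop] by blast
  obtain hj0 where hj0: "hj0 > 0" and thj: "\<And>h. 0 < h \<and> h \<le> hj0 \<Longrightarrow> ej + h \<in> Dm j \<and> ej - h \<in> Dm j \<and>
     L j (ej + h) - L j ej - h * (tm j ej + rho) \<le> - (h * rho / 2) \<and>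
     L j (ej - h) - L j ej + h * (tm j ej - rho) \<le> - (h * rho / 2)"
    using tilt_q[OF j ej(1) rhop] by blast
  define h where "h = min hi0 hj0"
  have hp: "h > 0" using hi0 hj0 by (simp add: h_def)
  have ti: "ei + h \<in> Dm i \<and> ei - h \<in> Dm i \<and>
     L i (ei + h) - L i ei - h * (a + rho) \<le> - (h * rho / 2) \<and>
     L i (ei - h) - L i ei + h * (a - rho) \<le> - (h * rho / 2)"
    using thi[of h] hp ei(2) by (simp add: h_def)
  have tj: "ej + h \<in> Dm j \<and> ej - h \<in> Dm j \<and>
     L j (ej + h) - L j ej - h * (b + rho) \<le> - (h * rho / 2) \<and>
     L j (ej - h) - L j ej + h * (b - rho) \<le> - (h * rho / 2)"
    using thj[of h] hp ej(2) by (simp add: h_def)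
  define q where "q = exp (- (h * rho / 2))"
  have q: "0 < q" "q < 1" using hp rhop by (auto simp: q_def)
  obtain N0 where N0: "\<And>n. n \<ge> N0 \<Longrightarrow> q ^ n \<le> 1 / 8" using pow_small[OF q] by blast
  have eiD: "ei \<in> Dm i" using ei(1) interior_subset by blast
  have ejD: "ej \<in> Dm j" using ej(1) interior_subset by blast
  define Ri' where "Ri' = ei * a - L i ei + \<bar>ei\<bar> * rho"
  define Rj' where "Rj' = ej * b - L j ej + \<bar>ej\<bar> * rho"
  have Ri'0: "Ri' \<ge> 0" using good_R(2)[OF i gi aJ] Ra' rhop by (simp add: Ri'_def)
  have Rj'0: "Rj' \<ge> 0" using good_R(2)[OF j gj bJ] Rb' rhop by (simp add: Rj'_def)
  have rate: "ri * Ri' + rj * Rj' \<le> gg + eps"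
  proof -
    have "ri * Ri' + rj * Rj' = ri * R i a + rj * R j b + rho * (ri * \<bar>ei\<bar> + rj * \<bar>ej\<bar>)"
      unfolding Ri'_def Rj'_def Ra' Rb' by (simp add: algebra_simps)
    then show ?thesis using rate1 rhoe e8_def e8 by linarith
  qed
  define C where "C = ln 2 + Ri' + Rj'"
  define T0 where "T0 = max (real N0 / ri) (real N0 / rj) + 1"
  have "exp (- C - T * (gg + eps)) \<le> measure M (EvE T)" if T: "T \<ge> T0" for T
  proof -
    have Tp: "T > 0" using T ri rj by (simp add: T0_def) (smt (verit) divide_nonneg_pos of_nat_0_le_iff)
    define n where "n = nI T"
    define m where "m = nJ T"
    have n: "n > 0" unfolding n_def nI_def by (rule ceil_bounds(3)[OF ri Tp])
    have m: "m > 0" unfolding m_def nJ_def by (rule ceil_bounds(3)[OF rj Tp])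
    have nN: "n \<ge> N0"
    proof -
      have "real N0 / ri \<le> T" using T by (simp add: T0_def)
      then have "real N0 \<le> ri * T" using ri by (simp add: field_simps)
      also have "\<dots> \<le> real n" unfolding n_def nI_def by (rule ceil_bounds(1)[OF ri Tp])
      finally show ?thesis by simp
    qed
    have mN: "m \<ge> N0"
    proof -
      have "real N0 / rj \<le> T" using T by (simp add: T0_def)
      then have "real N0 \<le> rj * T" using rj by (simp add: field_simps)
      also have "\<dots> \<le> real m" unfolding m_def nJ_def by (rule ceil_bounds(1)[OF rj Tp])
      finally show ?thesis by simp
    qed
    define Box where "Box = {\<omega> \<in> space M. \<bar>Ssum i n \<omega> / real n - a\<bar> < rho \<and> \<bar>Ssum j m \<omega> / real m - b\<bar> < rho}"
    have sub: "Box \<subseteq> EvE T"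
    proof
      fix \<omega> assume w: "\<omega> \<in> Box"
      then have "Ssum i n \<omega> / real n < y" "y < Ssum j m \<omega> / real m"
        using rhod unfolding Box_def a_def b_def by auto
      then show "\<omega> \<in> EvE T" using w unfolding EvE_def Box_def smean_Ssum n_def m_def by auto
    qed
    have lb: "exp (- real n * Ri' - real m * Rj') * (1 - 2 * q ^ n - 2 * q ^ m) \<le> measure M Box"
      unfolding Box_def Ri'_def Rj'_def
    proof (rule tilt_lower[OF i j ij eiD ejD _ _ _ _ hp rhop n m])
      show "ei + h \<in> Dm i" "ei - h \<in> Dm i" using ti by auto
      show "ej + h \<in> Dm j" "ej - h \<in> Dm j" using tj by auto
      show "exp (L i (ei + h) - L i ei - h * (a + rho)) \<le> q" using ti by (simp add: q_def)
      show "exp (L i (ei - h) - L i ei + h * (a - rho)) \<le> q" using ti by (simp add: q_def)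
      show "exp (L j (ej + h) - L j ej - h * (b + rho)) \<le> q" using tj by (simp add: q_def)
      show "exp (L j (ej - h) - L j ej + h * (b - rho)) \<le> q" using tj by (simp add: q_def)
    qed
    have half: "1 - 2 * q ^ n - 2 * q ^ m \<ge> 1 / 2" using N0[OF nN] N0[OF mN] by simp
    have ex: "- (ri * T + 1) * Ri' - (rj * T + 1) * Rj' \<le> - real n * Ri' - real m * Rj'"
    proof -
      have "real n * Ri' \<le> (ri * T + 1) * Ri'" using Ri'0 ceil_bounds(2)[OF ri Tp]
        unfolding n_def nI_def by (intro mult_right_mono) auto
      moreover have "real m * Rj' \<le> (rj * T + 1) * Rj'" using Rj'0 ceil_bounds(2)[OF rj Tp]
        unfolding m_def nJ_def by (intro mult_right_mono) auto
      ultimately show ?thesis by (simp only: minus_mult_left[symmetric])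
    qed
    have "exp (- C - T * (gg + eps)) \<le> exp (- C - T * (ri * Ri' + rj * Rj'))"
      using rate Tp by (simp add: mult_left_mono)
    also have "\<dots> = exp (- (ri * T + 1) * Ri' - (rj * T + 1) * Rj') * (1 / 2)"
      unfolding C_def by (simp add: exp_diff exp_add exp_minus algebra_simps)
    also have "\<dots> \<le> exp (- real n * Ri' - real m * Rj') * (1 - 2 * q ^ n - 2 * q ^ m)"
      using ex half by (intro mult_mono) auto
    also have "\<dots> \<le> measure M Box" by (rule lb)
    also have "\<dots> \<le> measure M (EvE T)" by (rule finite_measure_mono[OF sub EvE_meas])
    finally show ?thesis .
  qed
  then show ?thesis unfolding eventually_at_top_linorder by blast
qed

end


context ldp2
begin

lemma pair_facts:
  assumes i: "i \<in> {1..k}" and j: "j \<in> {1..k}" and ij: "i \<noteq> j"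
    and ri: "ri > 0" and rj: "rj > 0"
    and mij: "mu j < mu i" and mui: "mu i \<in> {lo..hi}" and muj: "mu j \<in> {lo..hi}"
  shows "\<exists>g. Grate (Lam i) (Lam j) ri rj = ereal g \<and>
    (\<forall>eps>0. \<exists>C. \<forall>T>0. measure M {\<omega> \<in> space M. smean (X i) (nat \<lceil>ri * T\<rceil>) \<omega> \<le> smean (X j) (nat \<lceil>rj * T\<rceil>) \<omega>}
        \<le> exp (C - T * (g - eps))) \<and>
    (\<forall>eps>0. \<exists>C. \<forall>\<^sub>F T in at_top. exp (- C - T * (g + eps))
        \<le> measure M {\<omega> \<in> space M. smean (X i) (nat \<lceil>ri * T\<rceil>) \<omega> \<le> smean (X j) (nat \<lceil>rj * T\<rceil>) \<omega>})"
proof -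
  obtain Ai di where gi: "good i Ai di" using good_exists[OF i] by blast
  obtain Aj dj where gj: "good j Aj dj" using good_exists[OF j] by blast
  define d where "d = min di dj"
  have di: "di > 0" and dj: "dj > 0" using gi gj by (auto simp: good_def)
  have gi': "good i Ai d" using good_mono[OF gi] di dj by (simp add: d_def)
  have gj': "good j Aj d" using good_mono[OF gj] di dj by (simp add: d_def)
  interpret pr: pair M X k Lam lo hi i j ri rj Ai Aj d
    by (unfold_locales) (use i j ij ri rj mij mui muj gi' gj' in auto)
  show ?thesis
    using pr.G_eq pr.upper pr.lower unfolding pr.EvE_def pr.nI_def pr.nJ_def by blast
qed

end

lemma assemble:
  fixes PF :: "real \<Rightarrow> real" and Ep :: "'p \<Rightarrow> real \<Rightarrow> real" and gp :: "'p \<Rightarrow> real"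
  assumes fin: "finite P" and ne: "P \<noteq> {}"
    and sub: "\<And>T. T > 0 \<Longrightarrow> PF T \<le> (\<Sum>p\<in>P. Ep p T)"
    and sup: "\<And>p T. p \<in> P \<Longrightarrow> Ep p T \<le> PF T"
    and up: "\<And>p eps. p \<in> P \<Longrightarrow> eps > 0 \<Longrightarrow> \<exists>C. \<forall>T>0. Ep p T \<le> exp (C - T * (gp p - eps))"
    and lw: "\<And>p eps. p \<in> P \<Longrightarrow> eps > 0 \<Longrightarrow> \<exists>C. \<forall>\<^sub>F T in at_top. exp (- C - T * (gp p + eps)) \<le> Ep p T"
  shows "((\<lambda>T. ln (PF T) / T) \<longlongrightarrow> - Min (gp ` P)) at_top"
proof -
  define gs where "gs = Min (gp ` P)"
  have "gs \<in> gp ` P" unfolding gs_def using fin ne by (intro Min_in) auto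
  then obtain p0 where p0: "p0 \<in> P" "gp p0 = gs" by auto
  have gsle: "gs \<le> gp p" if "p \<in> P" for p using fin that unfolding gs_def by simp
  show ?thesis
    unfolding gs_def[symmetric]
  proof (rule tendstoI)
    fix e :: real assume e: "e > 0"
    define eps where "eps = e / 3"
    have eps: "eps > 0" using e by (simp add: eps_def)
    have "\<forall>p\<in>P. \<exists>C. \<forall>T>0. Ep p T \<le> exp (C - T * (gp p - eps))" using up eps by blast
    then obtain Cu where Cu: "\<And>p T. p \<in> P \<Longrightarrow> T > 0 \<Longrightarrow> Ep p T \<le> exp (Cu p - T * (gp p - eps))"
      by metis
    obtain Cl where Cl: "\<forall>\<^sub>F T in at_top. exp (- Cl - T * (gp p0 + eps)) \<le> Ep p0 T"
      using lw[OF p0(1) eps] by blast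
    define Su where "Su = (\<Sum>p\<in>P. exp (Cu p))"
    have Su: "Su > 0" unfolding Su_def using fin ne by (intro sum_pos) auto
    define T1 where "T1 = max 1 (max (\<bar>ln Su\<bar> / eps) (\<bar>Cl\<bar> / eps))"
    have ev1: "\<forall>\<^sub>F T in at_top. T \<ge> T1" by (rule eventually_ge_at_top)
    show "\<forall>\<^sub>F T in at_top. dist (ln (PF T) / T) (- gs) < e"
      using Cl ev1
    proof eventually_elim
      case (elim T)
      have T: "T > 0" using elim(2) by (simp add: T1_def)
      have lowb: "exp (- Cl - T * (gs + eps)) \<le> PF T"
        using elim(1) sup[OF p0(1), of T] p0(2) by simp
      have PFp: "PF T > 0" using lowb by (meson exp_gt_zero less_le_trans)
      have "PF T \<le> (\<Sum>p\<in>P. Ep p T)" by (rule sub[OF T])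
      also have "\<dots> \<le> (\<Sum>p\<in>P. exp (Cu p - T * (gs - eps)))"
      proof (rule sum_mono)
        fix p assume p: "p \<in> P"
        have "T * (gs - eps) \<le> T * (gp p - eps)" using gsle[OF p] T by (intro mult_left_mono) auto
        then show "Ep p T \<le> exp (Cu p - T * (gs - eps))"
          using Cu[OF p T] by (meson diff_left_mono exp_le_cancel_iff order_trans)
      qed
      also have "\<dots> = Su / exp (T * (gs - eps))" by (simp add: Su_def exp_diff sum_divide_distrib)
      also have "\<dots> = exp (ln Su - T * (gs - eps))" using Su by (simp add: exp_diff)
      finally have upb: "PF T \<le> exp (ln Su - T * (gs - eps))" .
      have l1: "ln (PF T) \<le> ln Su - T * (gs - eps)"
        using upb PFp by (metis ln_exp ln_le_cancel_iff exp_gt_zero)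
      have l2: "- Cl - T * (gs + eps) \<le> ln (PF T)"
        using lowb PFp by (metis ln_exp ln_le_cancel_iff exp_gt_zero)
      have a1: "\<bar>ln Su\<bar> / T \<le> eps"
      proof -
        have "\<bar>ln Su\<bar> / eps \<le> T" using elim(2) by (simp add: T1_def)
        then show ?thesis using eps T by (simp add: field_simps)
      qed
      have a2: "\<bar>Cl\<bar> / T \<le> eps"
      proof -
        have "\<bar>Cl\<bar> / eps \<le> T" using elim(2) by (simp add: T1_def)
        then show ?thesis using eps T by (simp add: field_simps)
      qed
      have u: "ln (PF T) / T \<le> ln Su / T - (gs - eps)"
      proof -
        have "ln (PF T) / T \<le> (ln Su - T * (gs - eps)) / T" by (rule divide_right_mono[OF l1]) (use T in simp)
        also have "(ln Su - T * (gs - eps)) / T = ln Su / T - (gs - eps)" using T by (simp add: diff_divide_distrib)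
        finally show ?thesis .
      qed
      have lo': "- Cl / T - (gs + eps) \<le> ln (PF T) / T"
      proof -
        have "(- Cl - T * (gs + eps)) / T \<le> ln (PF T) / T" by (rule divide_right_mono[OF l2]) (use T in simp)
        moreover have "(- Cl - T * (gs + eps)) / T = - Cl / T - (gs + eps)" using T by (simp add: diff_divide_distrib)
        ultimately show ?thesis by simp
      qed
      have "ln Su / T \<le> \<bar>ln Su\<bar> / T" using T by (simp add: divide_right_mono)
      moreover have "- Cl / T \<ge> - (\<bar>Cl\<bar> / T)" using T by (simp add: divide_right_mono)
      ultimately have "\<bar>ln (PF T) / T - (- gs)\<bar> \<le> 2 * eps" using u lo' a1 a2 by linarith
      then show ?case using e by (simp add: dist_real_def eps_def)
    qed
  qed
qed


theorem theorem2:
  fixes M :: "'a measure"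
    and X :: "nat \<Rightarrow> nat \<Rightarrow> 'a \<Rightarrow> real"
    and \<mu> :: "nat \<Rightarrow> real"
    and \<sigma> :: "nat \<Rightarrow> nat"
    and r :: "nat \<Rightarrow> real"
    and Lam :: "nat \<Rightarrow> real \<Rightarrow> ereal"
    and k m :: nat
  assumes P: "prob_space M"
    and k2: "k \<ge> 2" and m1: "1 \<le> m" and mk: "m < k"
    and rv: "\<And>l t. l \<in> {1..k} \<Longrightarrow> X l t \<in> borel_measurable M"
    and indep: "prob_space.indep_vars M (\<lambda>_. borel) (\<lambda>p. X (fst p) (snd p)) ({1..k} \<times> UNIV)"
    and ident: "\<And>l t. l \<in> {1..k} \<Longrightarrow> distr M borel (X l t) = distr M borel (X l 0)"
    and integ: "\<And>l. l \<in> {1..k} \<Longrightarrow> integrable M (X l 0)"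
    and mean: "\<And>l. l \<in> {1..k} \<Longrightarrow> (\<integral>\<omega>. X l 0 \<omega> \<partial>M) = \<mu> l"
    and sigma: "bij_betw \<sigma> {1..k} {1..k}"
    and order: "\<And>i. i \<in> {1..<k} \<Longrightarrow> \<mu> (\<sigma> i) > \<mu> (\<sigma> (Suc i))"
    and A1: "\<And>l lam. l \<in> {1..k} \<Longrightarrow>
          ((\<lambda>n. cgf_n M (X l) n (real n * lam) / ereal (real n)) \<longlongrightarrow> Lam l lam) sequentially"
    and A2: "\<And>l. l \<in> {1..k} \<Longrightarrow> 0 \<in> interior (edom (Lam l))"
    and A3: "\<And>l. l \<in> {1..k} \<Longrightarrow>
          strictly_convex_on (interior (edom (Lam l))) (rpart (Lam l))
          \<and> continuous_on (interior (edom (Lam l))) (rpart (Lam l))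
          \<and> steep (Lam l)"
    and A4: "{\<mu> (\<sigma> k)..\<mu> (\<sigma> 1)} \<subseteq> (\<Inter>l\<in>{1..k}. interior (Fset (Lam l)))"
    and rpos: "\<And>l. l \<in> {1..k} \<Longrightarrow> r l > 0"
    and rsum: "(\<Sum>l\<in>{1..k}. r l) = 1"
  shows "((\<lambda>T::real. ereal (ln (measure M {\<omega> \<in> space M.
            \<exists>i\<in>{1..m}. \<exists>j\<in>{m+1..k}.
              smean (X (\<sigma> i)) (nat \<lceil>r (\<sigma> i) * T\<rceil>) \<omega>
                \<le> smean (X (\<sigma> j)) (nat \<lceil>r (\<sigma> j) * T\<rceil>) \<omega>}) / T))
          \<longlongrightarrow> - Min ((\<lambda>(i, j). Grate (Lam (\<sigma> i)) (Lam (\<sigma> j)) (r (\<sigma> i)) (r (\<sigma> j)))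
                        ` ({1..m} \<times> {m+1..k}))) at_top"
proof -
  have ldpI: "ldp M X k Lam"
    by (rule ldp.intro[OF P ldp_axioms.intro[OF rv indep ident integ A1 A2]])
  interpret ldp M X k Lam by (rule ldpI)
  have mu_eq: "mu l = \<mu> l" if "l \<in> {1..k}" for l using mean[OF that] by (simp add: mu_def)
  have sig: "\<sigma> a \<in> {1..k}" if "a \<in> {1..k}" for a using sigma that by (rule bij_betw_apply)
  have ord: "\<forall>a. 1 \<le> a \<longrightarrow> a < b \<longrightarrow> b \<le> k \<longrightarrow> \<mu> (\<sigma> b) < \<mu> (\<sigma> a)" for b
  proof (induction b)
    case 0 then show ?case by simp
  next
    case (Suc b)
    show ?case
    proof (intro allI impI)
      fix a assume a: "1 \<le> a" "a < Suc b" "Suc b \<le> k"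
      have step: "\<mu> (\<sigma> (Suc b)) < \<mu> (\<sigma> b)" if "b \<ge> 1" using order[of b] that a by simp
      show "\<mu> (\<sigma> (Suc b)) < \<mu> (\<sigma> a)"
      proof (cases "a = b")
        case True then show ?thesis using step a by simp
      next
        case False
        then have "a < b" using a by simp
        then have "\<mu> (\<sigma> b) < \<mu> (\<sigma> a)" using Suc.IH a by simp
        then show ?thesis using step a \<open>a < b\<close> by simp
      qed
    qed
  qed
  have ordle: "\<mu> (\<sigma> b) \<le> \<mu> (\<sigma> a)" if "1 \<le> a" "a \<le> b" "b \<le> k" for a b
    using ord[of b] that by (cases "a = b") (auto simp: less_imp_le)
  define lo where "lo = \<mu> (\<sigma> k)"
  define hi where "hi = \<mu> (\<sigma> 1)"
  have lohi: "lo \<le> hi" unfolding lo_def hi_def using ordle[of 1 k] k2 by simp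
  have Hs: "{lo..hi} \<subseteq> interior (Fset (Lam l))" if "l \<in> {1..k}" for l
    using A4 that unfolding lo_def hi_def by blast
  interpret ldp2 M X k Lam lo hi
    by unfold_locales (use lohi Hs in auto)
  have murange: "mu (\<sigma> a) \<in> {lo..hi}" if "a \<in> {1..k}" for a
    using ordle[of a k] ordle[of 1 a] that mu_eq[OF sig[OF that]] unfolding lo_def hi_def by auto
  define PP where "PP = {1..m} \<times> {m+1..k}"
  have finP: "finite PP" and neP: "PP \<noteq> {}" using m1 mk by (auto simp: PP_def)
  define E where "E p T = {\<omega> \<in> space M. smean (X (\<sigma> (fst p))) (nat \<lceil>r (\<sigma> (fst p)) * T\<rceil>) \<omega>
                              \<le> smean (X (\<sigma> (snd p))) (nat \<lceil>r (\<sigma> (snd p)) * T\<rceil>) \<omega>}" for p T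
  have pf: "\<exists>g. Grate (Lam (\<sigma> (fst p))) (Lam (\<sigma> (snd p))) (r (\<sigma> (fst p))) (r (\<sigma> (snd p))) = ereal g \<and>
    (\<forall>eps>0. \<exists>C. \<forall>T>0. measure M (E p T) \<le> exp (C - T * (g - eps))) \<and>
    (\<forall>eps>0. \<exists>C. \<forall>\<^sub>F T in at_top. exp (- C - T * (g + eps)) \<le> measure M (E p T))"
    if p: "p \<in> PP" for p
  proof -
    have a: "fst p \<in> {1..k}" and b: "snd p \<in> {1..k}" and ab: "fst p < snd p"
      using p mk by (auto simp: PP_def)
    have ne: "\<sigma> (fst p) \<noteq> \<sigma> (snd p)"
    proof
      assume "\<sigma> (fst p) = \<sigma> (snd p)"
      then have "fst p = snd p" using bij_betw_imp_inj_on[OF sigma] a b unfolding inj_on_def by blast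
      then show False using ab by simp
    qed
    have lt: "mu (\<sigma> (snd p)) < mu (\<sigma> (fst p))"
      using ord[of "snd p"] a b ab mu_eq[OF sig[OF a]] mu_eq[OF sig[OF b]] by auto
    show ?thesis
      unfolding E_def
      by (rule pair_facts[OF sig[OF a] sig[OF b] ne rpos[OF sig[OF a]] rpos[OF sig[OF b]] lt
            murange[OF a] murange[OF b]])
  qed
  define Q where "Q p g \<longleftrightarrow> Grate (Lam (\<sigma> (fst p))) (Lam (\<sigma> (snd p))) (r (\<sigma> (fst p))) (r (\<sigma> (snd p))) = ereal g \<and>
    (\<forall>eps>0. \<exists>C. \<forall>T>0. measure M (E p T) \<le> exp (C - T * (g - eps))) \<and>
    (\<forall>eps>0. \<exists>C. \<forall>\<^sub>F T in at_top. exp (- C - T * (g + eps)) \<le> measure M (E p T))" for p g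
  have "\<forall>p\<in>PP. \<exists>g. Q p g" using pf unfolding Q_def by blast
  from bchoice[OF this] obtain gp where gpQ: "\<forall>p\<in>PP. Q p (gp p)" by blast
  have gp: "Grate (Lam (\<sigma> (fst p))) (Lam (\<sigma> (snd p))) (r (\<sigma> (fst p))) (r (\<sigma> (snd p))) = ereal (gp p) \<and>
    (\<forall>eps>0. \<exists>C. \<forall>T>0. measure M (E p T) \<le> exp (C - T * (gp p - eps))) \<and>
    (\<forall>eps>0. \<exists>C. \<forall>\<^sub>F T in at_top. exp (- C - T * (gp p + eps)) \<le> measure M (E p T))"
    if "p \<in> PP" for p using gpQ that unfolding Q_def by blast
  have Em: "E p T \<in> sets M" if "p \<in> PP" for p T
  proof -
    have a: "\<sigma> (fst p) \<in> {1..k}" and b: "\<sigma> (snd p) \<in> {1..k}" using that sig by (auto simp: PP_def)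
    have [measurable]: "Ssum (\<sigma> (fst p)) n \<in> borel_measurable M" "Ssum (\<sigma> (snd p)) n \<in> borel_measurable M" for n
      using a b by auto
    show ?thesis unfolding E_def smean_Ssum by measurable
  qed
  define PF where "PF T = measure M {\<omega> \<in> space M.
            \<exists>i\<in>{1..m}. \<exists>j\<in>{m+1..k}.
              smean (X (\<sigma> i)) (nat \<lceil>r (\<sigma> i) * T\<rceil>) \<omega>
                \<le> smean (X (\<sigma> j)) (nat \<lceil>r (\<sigma> j) * T\<rceil>) \<omega>}" for T
  have Ueq: "{\<omega> \<in> space M.
            \<exists>i\<in>{1..m}. \<exists>j\<in>{m+1..k}.
              smean (X (\<sigma> i)) (nat \<lceil>r (\<sigma> i) * T\<rceil>) \<omega>
                \<le> smean (X (\<sigma> j)) (nat \<lceil>r (\<sigma> j) * T\<rceil>) \<omega>} = (\<Union>p\<in>PP. E p T)" for T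
  proof (intro equalityI subsetI)
    fix x assume "x \<in> {\<omega> \<in> space M.
            \<exists>i\<in>{1..m}. \<exists>j\<in>{m+1..k}.
              smean (X (\<sigma> i)) (nat \<lceil>r (\<sigma> i) * T\<rceil>) \<omega>
                \<le> smean (X (\<sigma> j)) (nat \<lceil>r (\<sigma> j) * T\<rceil>) \<omega>}"
    then obtain i j where "x \<in> space M" "i \<in> {1..m}" "j \<in> {m+1..k}"
      "smean (X (\<sigma> i)) (nat \<lceil>r (\<sigma> i) * T\<rceil>) x \<le> smean (X (\<sigma> j)) (nat \<lceil>r (\<sigma> j) * T\<rceil>) x"
      by blast
    then show "x \<in> (\<Union>p\<in>PP. E p T)" unfolding E_def PP_def by (intro UN_I[of "(i, j)"]) auto
  next
    fix x assume "x \<in> (\<Union>p\<in>PP. E p T)"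
    then obtain p where p: "p \<in> PP" "x \<in> E p T" by blast
    then show "x \<in> {\<omega> \<in> space M.
            \<exists>i\<in>{1..m}. \<exists>j\<in>{m+1..k}.
              smean (X (\<sigma> i)) (nat \<lceil>r (\<sigma> i) * T\<rceil>) \<omega>
                \<le> smean (X (\<sigma> j)) (nat \<lceil>r (\<sigma> j) * T\<rceil>) \<omega>}"
    proof -
      obtain a b where ab: "p = (a, b)" by (cases p)
      have a: "a \<in> {1..m}" and b: "b \<in> {m+1..k}" using p(1) ab by (auto simp: PP_def)
      have x: "x \<in> space M" "smean (X (\<sigma> a)) (nat \<lceil>r (\<sigma> a) * T\<rceil>) x \<le> smean (X (\<sigma> b)) (nat \<lceil>r (\<sigma> b) * T\<rceil>) x"
        using p(2) ab by (auto simp: E_def)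
      show ?thesis using a b x by blast
    qed
  qed
  have lim: "((\<lambda>T. ln (PF T) / T) \<longlongrightarrow> - Min (gp ` PP)) at_top"
  proof (rule assemble[OF finP neP, where Ep="\<lambda>p T. measure M (E p T)"])
    fix T :: real assume "T > 0"
    show "PF T \<le> (\<Sum>p\<in>PP. measure M (E p T))"
      unfolding PF_def Ueq by (rule measure_UNION_le[OF finP]) (rule Em)
  next
    fix p T assume p: "p \<in> PP"
    show "measure M (E p T) \<le> PF T"
      unfolding PF_def Ueq
      by (rule finite_measure_mono) (use p Em finP in auto)
  next
    fix p :: "nat \<times> nat" and eps :: real assume "p \<in> PP" "eps > 0"
    then show "\<exists>C. \<forall>T>0. measure M (E p T) \<le> exp (C - T * (gp p - eps))" using gp by blast
  next
    fix p :: "nat \<times> nat" and eps :: real assume "p \<in> PP" "eps > 0"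
    then show "\<exists>C. \<forall>\<^sub>F T in at_top. exp (- C - T * (gp p + eps)) \<le> measure M (E p T)" using gp by blast
  qed
  have MinEq: "Min ((\<lambda>(i, j). Grate (Lam (\<sigma> i)) (Lam (\<sigma> j)) (r (\<sigma> i)) (r (\<sigma> j))) ` ({1..m} \<times> {m+1..k}))
      = ereal (Min (gp ` PP))"
  proof -
    have "(\<lambda>(i, j). Grate (Lam (\<sigma> i)) (Lam (\<sigma> j)) (r (\<sigma> i)) (r (\<sigma> j))) ` ({1..m} \<times> {m+1..k})
        = (\<lambda>p. ereal (gp p)) ` PP"
      unfolding PP_def[symmetric] by (rule image_cong[OF refl]) (use gp in \<open>auto simp: split_beta\<close>)
    also have "\<dots> = ereal ` (gp ` PP)" by (simp add: image_image)
    finally show ?thesis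
      using mono_Min_commute[of ereal "gp ` PP"] finP neP by (simp add: mono_def)
  qed
  have "((\<lambda>T. ereal (ln (PF T) / T)) \<longlongrightarrow> ereal (- Min (gp ` PP))) at_top"
    using lim by (rule tendsto_ereal)
  then show ?thesis unfolding PF_def[symmetric] MinEq by simp
qed

end
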